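(* In DP-EFB, for every trial $t$, define for $a\in\mathcal A$ $$\theta_t(a):=\frac{[a\in V(\sigma_t)]\,\eta\, d_t(a)}{\gamma\beta(a)+q_t(a)}$$ (taken to be $0$ when $a\notin V(\sigma_t)$). Then $$\psi_t(r)=\sum_{\sigma\in\mathcal S}\Big(\prod_{a\in\mathcal A(\sigma)}\pi_t(a)\Big)\exp\Big(-\sum_{a\in\mathcal A(\sigma)}\theta_t(a)\Big),$$ where $\prod_{a\in\mathcal A(\sigma)}\pi_t(a)=\Pr[\sigma_t=\sigma\mid\pi_t]$.
   Context: Game tree: $V$ is the node set of a finite rooted tree with root $r$ and leaf set $L$; $C(v)$ denotes the set of children of $v$ and $p(v)$ the parent of $v\neq r$. The internal nodes $V\setminus L$ are partitioned into a set $N$ of infosets and a set $\mathcal A$ of actions such that $r\in N$, $C(v)\subseteq\mathcal A$ and $|C(v)|>1$ for every $v\in N$, and $C(a)\subseteq N\cup L$ for every $a\in\mathcal A$. A loss function $\lambda:L\to[0,1]$ is fixed. A (pure) strategy is a map $\sigma:N\to V$ with $\sigma(v)\in C(v)$ for all $v\in N$; an environment is a map $\mu:\mathcal A\to V$ with $\mu(a)\in C(a)$ for all $a\in\mathcal A$. For a strategy $\sigma$, $V(\sigma)$ is the smallest subset of $V$ containing $r$, containing $\sigma(v)$ for every $v\in N\cap V(\sigma)$, and containing $C(a)$ for every $a\in\mathcal A\cap V(\sigma)$. The reduced strategy of $\sigma$ is the restriction of $\sigma$ to $N\cap V(\sigma)$ (with $V$ of it defined as $V(\sigma)$); $\mathcal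 S$ is the set of all reduced strategies. For $\sigma\in\mathcal S$ write $N(\sigma)=N\cap V(\sigma)$, $\mathcal A(\sigma)=\mathcal A\cap V(\sigma)$. Playing a pair $(\sigma,\mu)$, $\sigma\in\mathcal S$, $\mu$ an environment, traverses the root-to-leaf path starting at $r$, moving from $v\in N$ to $\sigma(v)$ and from $a\in\mathcal A$ to $\mu(a)$, stopping at a leaf $u$; the loss is $\Lambda(\sigma,\mu):=\lambda(u)$, and the last action on this path is called the last action encountered. Functions $n,m:N\cup\mathcal A\to\mathbb N$ are defined recursively from the bottom of the tree: for $a\in\mathcal A$, $n(a)=\prod_{v\in C(a)\cap N}n(v)$ and $m(a)=1+\sum_{v\in C(a)\cap N}m(v)$ (empty product $=1$, empty sum $=0$); for $v\in N$, $n(v)=\sum_{a\in C(v)}n(a)$ and $m(v)=\sum_{a\in C(v)}m(a)$. The function $\beta:N\cup\mathcal A\to\mathbb R$ is defined from the top: $\beta(r)=1$, $\beta(a)=m(a)\beta(p(a))$ for $a\in\mathcal A$, $\beta(v)=\beta(p(v))/m(v)$ for $v\in N\setminus\{r\}$. Algorithm DP-EFB (parameters $T$, $\epsilon\in(0,1)$): set $\eta:=\left(\left(\frac{6\ln T}{\epsilon}+\frac{9(e-2)}{\epsilon^2}\right)\frac{m(r)T}{\ln n(r)}\right)^{-1/2}$ and $\gamma:=6\ln(T)\eta/\epsilon$. A policy is a map $\pi:\mathcal A\to[0,1]$ with $\sum_{a\in C(v)}\pi(a)=1$ for all $v\in N$. Initially $\pi_1(a):=n(a)/n(p(a))$ for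 all $a\in\mathcal A$. For $a\in\mathcal A$, let $q_t(a)$ be the product of $\pi_t(a')$ over all actions $a'$ on the path from $r$ to $a$ (including $a$). Environments $\mu_1,\dots,\mu_T$ are fixed in advance. On each trial $t=1,\dots,T$: (i) the server samples $\sigma_t\in\mathcal S$ recursively: starting at $r$, at each visited infoset $v$ it draws $\sigma_t(v)\in C(v)$ with $\Pr[\sigma_t(v)=a]=\pi_t(a)$ independently, and then visits every $v'\in C(\sigma_t(v))\cap N$. (ii) $(\sigma_t,\mu_t)$ is played, giving loss $\ell_t:=\Lambda(\sigma_t,\mu_t)$; let $z_t$ be the last action encountered. (iii) For each $a\in\mathcal A(\sigma_t)$, independently draw $\phi_t(a)$ from the Laplace density $Q(x)=\frac{\epsilon}{4}\exp(-\frac{\epsilon}{2}|x|)$ and set $d_t(a):=[a=z_t]\,\ell_t+\phi_t(a)$ (where $[P]$ is $1$ if $P$ holds and $0$ otherwise); $d_t:\mathcal A(\sigma_t)\to\mathbb R$ is sent to the server. (iv) The server runs $\mathrm{Update}_t(r,1)$, where for $v\in N(\sigma_t)$ and $x>0$, $\mathrm{Update}_t(v,x)$ does: let $b:=\sigma_t(v)$; for each $v'\in C(b)\cap N$ run $\mathrm{Update}_t(v',\pi_t(b)x)$ and call its return value $\psi_t(v')$; set $\omega_t(v):=\exp\!\left(\frac{-\eta\, d_t(b)}{\gamma\beta(b)+\pi_t(b)x}\right)\prod_{v'\in C(b)\cap N}\psi_t(v')$; for all $a\in C(v)$ set $\pi_{t+1}(a):=\frac{[a=b]\,\omega_t(v)\pi_t(a)+[a\ne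 b]\,\pi_t(a)}{1-(1-\omega_t(v))\pi_t(b)}$; return $\psi_t(v):=1-(1-\omega_t(v))\pi_t(b)$. For every $v\in N\setminus N(\sigma_t)$, $\pi_{t+1}(a):=\pi_t(a)$ for all $a\in C(v)$. *)

theory Defs
  imports Complex_Main
begin

record 'v game =
  root :: 'v
  nodes :: "'v set"
  ch :: "'v \<Rightarrow> 'v set"
  infosets :: "'v set"
  actions :: "'v set"

definition leaves :: "'v game \<Rightarrow> 'v set" where
  "leaves G = {v \<in> nodes G. ch G v = {}}"

definition edges :: "'v game \<Rightarrow> ('v \<times> 'v) set" where
  "edges G = {(u, w). u \<in> nodes G \<and> w \<in> ch G u}"

definition game_tree :: "'v game \<Rightarrow> bool" where
  "game_tree G \<longleftrightarrow>
     finite (nodes G) \<and> root G \<in> nodes G \<and>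
     (\<forall>v. v \<notin> nodes G \<longrightarrow> ch G v = {}) \<and>
     (\<forall>v \<in> nodes G. ch G v \<subseteq> nodes G) \<and>
     (\<forall>u \<in> nodes G. root G \<notin> ch G u) \<and>
     (\<forall>v \<in> nodes G - {root G}. \<exists>!u. u \<in> nodes G \<and> v \<in> ch G u) \<and>
     (\<forall>v \<in> nodes G. (root G, v) \<in> (edges G)\<^sup>*) \<and>
     infosets G \<union> actions G = nodes G - leaves G \<and>
     infosets G \<inter> actions G = {} \<and>
     root G \<in> infosets G \<and>
     (\<forall>v \<in> infosets G. ch G v \<subseteq> actions G \<and> card (ch G v) > 1) \<and>
     (\<forall>a \<in> actions G. ch G a \<subseteq> infosets G \<union> leaves G)"

definition par :: "'v game \<Rightarrow> 'v \<Rightarrow> 'v" where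
  "par G v = (THE u. u \<in> nodes G \<and> v \<in> ch G u)"

(* V(sigma) for a (possibly partial) strategy given as a map *)
inductive_set reach :: "'v game \<Rightarrow> ('v \<Rightarrow> 'v option) \<Rightarrow> 'v set"
  for G :: "'v game" and \<sigma> :: "'v \<Rightarrow> 'v option" where
  reach_root: "root G \<in> reach G \<sigma>"
| reach_inf: "v \<in> reach G \<sigma> \<Longrightarrow> v \<in> infosets G \<Longrightarrow> \<sigma> v = Some b \<Longrightarrow> b \<in> reach G \<sigma>"
| reach_act: "a \<in> reach G \<sigma> \<Longrightarrow> a \<in> actions G \<Longrightarrow> w \<in> ch G a \<Longrightarrow> w \<in> reach G \<sigma>"

definition is_strategy :: "'v game \<Rightarrow> ('v \<Rightarrow> 'v) \<Rightarrow> bool" where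
  "is_strategy G \<sigma> \<longleftrightarrow> (\<forall>v \<in> infosets G. \<sigma> v \<in> ch G v)"

definition reduce :: "'v game \<Rightarrow> ('v \<Rightarrow> 'v) \<Rightarrow> ('v \<Rightarrow> 'v option)" where
  "reduce G \<sigma> = (\<lambda>v. if v \<in> infosets G \<inter> reach G (Some \<circ> \<sigma>) then Some (\<sigma> v) else None)"

definition rstrats :: "'v game \<Rightarrow> ('v \<Rightarrow> 'v option) set" where
  "rstrats G = {reduce G \<sigma> | \<sigma>. is_strategy G \<sigma>}"

definition Nof :: "'v game \<Rightarrow> ('v \<Rightarrow> 'v option) \<Rightarrow> 'v set" where
  "Nof G \<rho> = infosets G \<inter> reach G \<rho>"

definition Aof :: "'v game \<Rightarrow> ('v \<Rightarrow> 'v option) \<Rightarrow> 'v set" where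
  "Aof G \<rho> = actions G \<inter> reach G \<rho>"

(* n and m, computed bottom-up; the fuel card(nodes G) exceeds the tree height *)
fun nfun :: "'v game \<Rightarrow> nat \<Rightarrow> 'v \<Rightarrow> nat" where
  "nfun G 0 v = 1"
| "nfun G (Suc k) v = (if v \<in> actions G then (\<Prod>w \<in> ch G v \<inter> infosets G. nfun G k w)
                        else (\<Sum>a \<in> ch G v. nfun G k a))"

fun mfun :: "'v game \<Rightarrow> nat \<Rightarrow> 'v \<Rightarrow> nat" where
  "mfun G 0 v = 0"
| "mfun G (Suc k) v = (if v \<in> actions G then 1 + (\<Sum>w \<in> ch G v \<inter> infosets G. mfun G k w)
                        else (\<Sum>a \<in> ch G v. mfun G k a))"

definition nn :: "'v game \<Rightarrow> 'v \<Rightarrow> nat" where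
  "nn G v = nfun G (card (nodes G)) v"

definition mm :: "'v game \<Rightarrow> 'v \<Rightarrow> nat" where
  "mm G v = mfun G (card (nodes G)) v"

fun betaf :: "'v game \<Rightarrow> nat \<Rightarrow> 'v \<Rightarrow> real" where
  "betaf G 0 v = 1"
| "betaf G (Suc k) v = (if v = root G then 1
                         else if v \<in> actions G then real (mm G v) * betaf G k (par G v)
                         else betaf G k (par G v) / real (mm G v))"

definition beta :: "'v game \<Rightarrow> 'v \<Rightarrow> real" where
  "beta G v = betaf G (card (nodes G)) v"

definition qprod :: "'v game \<Rightarrow> ('v \<Rightarrow> real) \<Rightarrow> 'v \<Rightarrow> real" where
  "qprod G \<pi> a = (\<Prod>a' \<in> actions G \<inter> {u. (u, a) \<in> (edges G)\<^sup>*}. \<pi> a')"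

definition eta :: "'v game \<Rightarrow> nat \<Rightarrow> real \<Rightarrow> real" where
  "eta G T \<epsilon> = inverse (sqrt ((6 * ln (real T) / \<epsilon> + 9 * (exp 1 - 2) / \<epsilon>\<^sup>2)
                       * (real (mm G (root G)) * real T / ln (real (nn G (root G))))))"

definition gam :: "'v game \<Rightarrow> nat \<Rightarrow> real \<Rightarrow> real" where
  "gam G T \<epsilon> = 6 * ln (real T) * eta G T \<epsilon> / \<epsilon>"

(* Update_t(v,x) return value psi_t(v), with fuel *)
fun psif :: "'v game \<Rightarrow> real \<Rightarrow> real \<Rightarrow> ('v \<Rightarrow> real) \<Rightarrow> ('v \<Rightarrow> 'v option)
              \<Rightarrow> ('v \<Rightarrow> real) \<Rightarrow> nat \<Rightarrow> 'v \<Rightarrow> real \<Rightarrow> real" where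
  "psif G \<eta> \<gamma> \<pi> \<sigma> d 0 v x = 1"
| "psif G \<eta> \<gamma> \<pi> \<sigma> d (Suc k) v x =
     (let b = the (\<sigma> v);
          \<omega> = exp (- \<eta> * d b / (\<gamma> * beta G b + \<pi> b * x))
              * (\<Prod>v' \<in> ch G b \<inter> infosets G. psif G \<eta> \<gamma> \<pi> \<sigma> d k v' (\<pi> b * x))
      in 1 - (1 - \<omega>) * \<pi> b)"

definition omegaf :: "'v game \<Rightarrow> real \<Rightarrow> real \<Rightarrow> ('v \<Rightarrow> real) \<Rightarrow> ('v \<Rightarrow> 'v option)
              \<Rightarrow> ('v \<Rightarrow> real) \<Rightarrow> 'v \<Rightarrow> real \<Rightarrow> real" where
  "omegaf G \<eta> \<gamma> \<pi> \<sigma> d v x =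
     (let b = the (\<sigma> v)
      in exp (- \<eta> * d b / (\<gamma> * beta G b + \<pi> b * x))
         * (\<Prod>v' \<in> ch G b \<inter> infosets G. psif G \<eta> \<gamma> \<pi> \<sigma> d (card (nodes G)) v' (\<pi> b * x)))"

definition psi :: "'v game \<Rightarrow> real \<Rightarrow> real \<Rightarrow> ('v \<Rightarrow> real) \<Rightarrow> ('v \<Rightarrow> 'v option)
              \<Rightarrow> ('v \<Rightarrow> real) \<Rightarrow> 'v \<Rightarrow> real \<Rightarrow> real" where
  "psi G \<eta> \<gamma> \<pi> \<sigma> d v x = psif G \<eta> \<gamma> \<pi> \<sigma> d (card (nodes G)) v x"

(* the argument x with which Update_t(v, .) is called: 1 at the root, q_t(p(v)) otherwise *)
definition xarg :: "'v game \<Rightarrow> ('v \<Rightarrow> real) \<Rightarrow> 'v \<Rightarrow> real" where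
  "xarg G \<pi> v = (if v = root G then 1 else qprod G \<pi> (par G v))"

definition pol_update :: "'v game \<Rightarrow> real \<Rightarrow> real \<Rightarrow> ('v \<Rightarrow> real) \<Rightarrow> ('v \<Rightarrow> 'v option)
              \<Rightarrow> ('v \<Rightarrow> real) \<Rightarrow> ('v \<Rightarrow> real)" where
  "pol_update G \<eta> \<gamma> \<pi> \<sigma> d = (\<lambda>a.
     if a \<in> actions G \<and> par G a \<in> Nof G \<sigma> then
       (let v = par G a; b = the (\<sigma> v);
            \<omega> = omegaf G \<eta> \<gamma> \<pi> \<sigma> d v (xarg G \<pi> v)
        in (if a = b then \<omega> * \<pi> a else \<pi> a) / (1 - (1 - \<omega>) * \<pi> b))
     else \<pi> a)"

definition pol_init :: "'v game \<Rightarrow> ('v \<Rightarrow> real)" where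
  "pol_init G = (\<lambda>a. if a \<in> actions G then real (nn G a) / real (nn G (par G a)) else 0)"

(* pol G T eps sig d k = pi_{k+1}, given the realized sampled strategies sig s and
   feedback vectors d s of the trials s = 1..k *)
fun pol :: "'v game \<Rightarrow> nat \<Rightarrow> real \<Rightarrow> (nat \<Rightarrow> 'v \<Rightarrow> 'v option) \<Rightarrow> (nat \<Rightarrow> 'v \<Rightarrow> real)
              \<Rightarrow> nat \<Rightarrow> ('v \<Rightarrow> real)" where
  "pol G T \<epsilon> sig d 0 = pol_init G"
| "pol G T \<epsilon> sig d (Suc k) =
     pol_update G (eta G T \<epsilon>) (gam G T \<epsilon>) (pol G T \<epsilon> sig d k) (sig (Suc k)) (d (Suc k))"

end

theory Submission
  imports Defs "HOL-Library.FuncSet"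
begin

locale gt = fixes G :: "'v game" assumes gt: "game_tree G"
begin

abbreviation "E \<equiv> edges G"
abbreviation "N \<equiv> infosets G"
abbreviation "A \<equiv> actions G"

lemma fin: "finite (nodes G)" using gt unfolding game_tree_def by blast
lemma root_in: "root G \<in> nodes G" using gt unfolding game_tree_def by blast
lemma ch_out: "v \<notin> nodes G \<Longrightarrow> ch G v = {}" using gt unfolding game_tree_def by blast
lemma ch_sub: "ch G v \<subseteq> nodes G" using gt ch_out unfolding game_tree_def by (cases "v \<in> nodes G") auto
lemma root_nch: "root G \<notin> ch G u" using gt ch_out unfolding game_tree_def by (cases "u \<in> nodes G") auto
lemma upar: "v \<in> nodes G \<Longrightarrow> v \<noteq> root G \<Longrightarrow> \<exists>!u. u \<in> nodes G \<and> v \<in> ch G u"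
  using gt unfolding game_tree_def by blast
lemma reach_all: "v \<in> nodes G \<Longrightarrow> (root G, v) \<in> E\<^sup>*" using gt unfolding game_tree_def by blast
lemma NA_part: "N \<union> A = nodes G - leaves G" using gt unfolding game_tree_def by blast
lemma NA_disj: "N \<inter> A = {}" using gt unfolding game_tree_def by blast
lemma root_N: "root G \<in> N" using gt unfolding game_tree_def by blast
lemma chN: "v \<in> N \<Longrightarrow> ch G v \<subseteq> A" using gt unfolding game_tree_def by blast
lemma chN_card: "v \<in> N \<Longrightarrow> card (ch G v) > 1" using gt unfolding game_tree_def by blast
lemma chA: "a \<in> A \<Longrightarrow> ch G a \<subseteq> N \<union> leaves G" using gt unfolding game_tree_def by blast

lemma fin_ch: "finite (ch G v)" using fin ch_sub finite_subset by blast
lemma chN_ne: "v \<in> N \<Longrightarrow> ch G v \<noteq> {}" using chN_card by fastforce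

lemma edge_iff: "(u, w) \<in> E \<longleftrightarrow> w \<in> ch G u"
  using ch_out unfolding edges_def by auto

lemma par_unique: "w \<in> ch G u \<Longrightarrow> w \<in> ch G u' \<Longrightarrow> u = u'"
proof -
  assume a: "w \<in> ch G u" "w \<in> ch G u'"
  have "u \<in> nodes G" "u' \<in> nodes G" using a ch_out by auto
  moreover have "w \<in> nodes G" using a ch_sub by auto
  moreover have "w \<noteq> root G" using a root_nch by auto
  ultimately show "u = u'" using upar a by blast
qed

lemma par_eq: "w \<in> ch G u \<Longrightarrow> par G w = u"
  unfolding par_def
  apply (rule the_equality)
  using ch_out par_unique by auto

lemma len_root: "(root G, x) \<in> E ^^ n \<Longrightarrow> (root G, x) \<in> E ^^ m \<Longrightarrow> n = m"
proof (induction n arbitrary: x m)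
  case 0
  then show ?case
    by (cases m) (auto simp: edge_iff root_nch elim: relpow_Suc_E)
next
  case (Suc n)
  from Suc.prems(1) obtain z where z: "(root G, z) \<in> E ^^ n" "(z, x) \<in> E" by (auto elim: relpow_Suc_E)
  show ?case
  proof (cases m)
    case 0 then show ?thesis using Suc.prems z by (auto simp: edge_iff root_nch)
  next
    case (Suc m')
    with Suc.prems(2) obtain z' where z': "(root G, z') \<in> E ^^ m'" "(z', x) \<in> E" by (auto elim: relpow_Suc_E)
    have "z = z'" using z z' par_unique by (auto simp: edge_iff)
    then show ?thesis using Suc.IH[OF z(1)] z' Suc by auto
  qed
qed

lemma len_unique: "v \<in> nodes G \<Longrightarrow> (v, x) \<in> E ^^ n \<Longrightarrow> (v, x) \<in> E ^^ m \<Longrightarrow> n = m"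
proof -
  assume a: "v \<in> nodes G" "(v, x) \<in> E ^^ n" "(v, x) \<in> E ^^ m"
  obtain p where p: "(root G, v) \<in> E ^^ p" using reach_all[OF a(1)] rtrancl_power by blast
  have "(root G, x) \<in> E ^^ (p + n)" "(root G, x) \<in> E ^^ (p + m)"
    using p a relpow_add by blast+
  then show "n = m" using len_root by fastforce
qed

lemma anc_unique: "(w, x) \<in> E ^^ k \<Longrightarrow> (w', x) \<in> E ^^ k \<Longrightarrow> w = w'"
proof (induction k arbitrary: x)
  case 0 then show ?case by simp
next
  case (Suc k)
  from Suc.prems obtain z z' where "(w, z) \<in> E ^^ k" "(z, x) \<in> E" "(w', z') \<in> E ^^ k" "(z', x) \<in> E"
    by (auto elim!: relpow_Suc_E)
  then show ?case using Suc.IH par_unique by (metis edge_iff)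
qed

lemma E_nodes: "(u, w) \<in> E \<Longrightarrow> u \<in> nodes G \<and> w \<in> nodes G"
  unfolding edges_def using ch_sub by auto

lemma acyc: "w \<in> ch G v \<Longrightarrow> (w, v) \<notin> E\<^sup>*"
proof
  assume a: "w \<in> ch G v" "(w, v) \<in> E\<^sup>*"
  then have v: "v \<in> nodes G" using ch_out by auto
  obtain k where k: "(w, v) \<in> E ^^ k" using a rtrancl_power by blast
  have "(v, w) \<in> E ^^ 1" using a by (simp add: edge_iff)
  then have "(v, v) \<in> E ^^ (1 + k)" using k relpow_add by blast
  moreover have "(v, v) \<in> E ^^ 0" by simp
  ultimately show False using len_unique[OF v] by fastforce
qed

definition D :: "'v \<Rightarrow> 'v set" where "D v = {u. (v, u) \<in> E\<^sup>*}"

lemma D_sub: "D v \<subseteq> insert v (nodes G)"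
  unfolding D_def by (auto elim: rtranclE dest: E_nodes)
lemma fin_D: "finite (D v)" using D_sub fin finite_subset by blast
lemma in_D: "v \<in> D v" unfolding D_def by simp

lemma D_unfold: "D u = insert u (\<Union>w\<in>ch G u. D w)"
  unfolding D_def
  by (auto simp: edge_iff elim: converse_rtranclE intro: converse_rtrancl_into_rtrancl)

lemma D_child: "w \<in> ch G v \<Longrightarrow> D w \<subseteq> D v"
  using D_unfold by blast
lemma D_child_notin: "w \<in> ch G v \<Longrightarrow> v \<notin> D w"
  using acyc unfolding D_def by blast
lemma D_child_card: "w \<in> ch G v \<Longrightarrow> card (D w) < card (D v)"
proof -
  assume a: "w \<in> ch G v"
  have "D w \<subset> D v" using D_child[OF a] D_child_notin[OF a] in_D[of v] by blast
  then show ?thesis using fin_D psubset_card_mono by blast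
qed
lemma D_trans: "u \<in> D v \<Longrightarrow> D u \<subseteq> D v"
  unfolding D_def by auto
lemma D_root: "D (root G) = nodes G"
  using D_sub root_in reach_all unfolding D_def by auto

end

lemma sum_PiE_two:
  fixes f g :: "('a \<Rightarrow> 'b) \<Rightarrow> 'c::comm_semiring_1"
  assumes "I \<inter> J = {}"
    and lf: "\<And>\<tau> \<tau>'. (\<forall>x\<in>I. \<tau> x = \<tau>' x \<and> \<tau> x \<in> S x) \<Longrightarrow> f \<tau> = f \<tau>'"
    and lg: "\<And>\<tau> \<tau>'. (\<forall>x\<in>J. \<tau> x = \<tau>' x \<and> \<tau> x \<in> S x) \<Longrightarrow> g \<tau> = g \<tau>'"
  shows "(\<Sum>\<tau>\<in>PiE (I \<union> J) S. f \<tau> * g \<tau>) = (\<Sum>\<tau>\<in>PiE I S. f \<tau>) * (\<Sum>\<tau>\<in>PiE J S. g \<tau>)"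
proof -
  define h where "h = (\<lambda>(p::'a\<Rightarrow>'b, q::'a\<Rightarrow>'b). (\<lambda>x. if x \<in> I then p x else q x))"
  have bij: "bij_betw h (PiE I S \<times> PiE J S) (PiE (I \<union> J) S)"
  proof (rule bij_betw_byWitness[where f'="\<lambda>\<tau>. (restrict \<tau> I, restrict \<tau> J)"])
    show "\<forall>a\<in>PiE I S \<times> PiE J S. (restrict (h a) I, restrict (h a) J) = a"
      using assms(1) by (auto simp: h_def PiE_iff extensional_def fun_eq_iff)
    show "\<forall>a'\<in>PiE (I \<union> J) S. h (restrict a' I, restrict a' J) = a'"
      by (auto simp: h_def PiE_iff extensional_def fun_eq_iff)
    show "h ` (PiE I S \<times> PiE J S) \<subseteq> PiE (I \<union> J) S"
      using assms(1) by (auto simp: h_def PiE_iff extensional_def)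
    show "(\<lambda>\<tau>. (restrict \<tau> I, restrict \<tau> J)) ` PiE (I \<union> J) S \<subseteq> PiE I S \<times> PiE J S"
      by auto
  qed
  have "(\<Sum>\<tau>\<in>PiE (I \<union> J) S. f \<tau> * g \<tau>) = (\<Sum>pq\<in>PiE I S \<times> PiE J S. f (h pq) * g (h pq))"
    using sum.reindex_bij_betw[OF bij, of "\<lambda>\<tau>. f \<tau> * g \<tau>"] by simp
  also have "\<dots> = (\<Sum>pq\<in>PiE I S \<times> PiE J S. f (fst pq) * g (snd pq))"
  proof (rule sum.cong)
    fix pq assume pq: "pq \<in> PiE I S \<times> PiE J S"
    obtain p q where [simp]: "pq = (p, q)" by force
    have "f (h pq) = f p" by (rule lf) (use pq in \<open>auto simp: h_def\<close>)
    moreover have "g (h pq) = g q" by (rule lg) (use assms(1) pq in \<open>auto simp: h_def\<close>)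
    ultimately show "f (h pq) * g (h pq) = f (fst pq) * g (snd pq)" by simp
  qed simp
  also have "\<dots> = (\<Sum>p\<in>PiE I S. \<Sum>q\<in>PiE J S. f p * g q)"
    by (simp add: sum.cartesian_product case_prod_beta)
  also have "\<dots> = (\<Sum>\<tau>\<in>PiE I S. f \<tau>) * (\<Sum>\<tau>\<in>PiE J S. g \<tau>)"
    by (simp add: sum_product)
  finally show ?thesis .
qed

lemma sum_PiE_blocks:
  fixes f :: "'k \<Rightarrow> ('a \<Rightarrow> 'b) \<Rightarrow> 'c::comm_semiring_1"
  assumes "finite K" "\<And>k k'. k \<in> K \<Longrightarrow> k' \<in> K \<Longrightarrow> k \<noteq> k' \<Longrightarrow> I k \<inter> I k' = {}"
    and "\<And>k \<tau> \<tau>'. k \<in> K \<Longrightarrow> (\<forall>x\<in>I k. \<tau> x = \<tau>' x \<and> \<tau> x \<in> S x) \<Longrightarrow> f k \<tau> = f k \<tau>'"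
  shows "(\<Sum>\<tau>\<in>PiE (\<Union>k\<in>K. I k) S. \<Prod>k\<in>K. f k \<tau>) = (\<Prod>k\<in>K. \<Sum>\<tau>\<in>PiE (I k) S. f k \<tau>)"
  using assms
proof (induction K rule: finite_induct)
  case empty
  then show ?case by simp
next
  case (insert k0 K)
  have d: "I k0 \<inter> (\<Union>k\<in>K. I k) = {}"
    using insert.prems(1) insert.hyps(2) by blast
  have "(\<Sum>\<tau>\<in>PiE (\<Union>k\<in>insert k0 K. I k) S. \<Prod>k\<in>insert k0 K. f k \<tau>)
      = (\<Sum>\<tau>\<in>PiE (I k0 \<union> (\<Union>k\<in>K. I k)) S. f k0 \<tau> * (\<Prod>k\<in>K. f k \<tau>))"
    using insert.hyps by simp
  also have "\<dots> = (\<Sum>\<tau>\<in>PiE (I k0) S. f k0 \<tau>) * (\<Sum>\<tau>\<in>PiE (\<Union>k\<in>K. I k) S. \<Prod>k\<in>K. f k \<tau>)"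
  proof (rule sum_PiE_two[OF d])
    show "f k0 \<tau> = f k0 \<tau>'" if "\<forall>x\<in>I k0. \<tau> x = \<tau>' x \<and> \<tau> x \<in> S x" for \<tau> \<tau>'
      using insert.prems(2) that by blast
    show "(\<Prod>k\<in>K. f k \<tau>) = (\<Prod>k\<in>K. f k \<tau>')" if "\<forall>x\<in>(\<Union>k\<in>K. I k). \<tau> x = \<tau>' x \<and> \<tau> x \<in> S x" for \<tau> \<tau>'
      using insert.prems(2) that by (intro prod.cong) (auto simp del: insert_iff, blast)
  qed
  also have "\<dots> = (\<Prod>k\<in>insert k0 K. \<Sum>\<tau>\<in>PiE (I k) S. f k \<tau>)"
  proof -
    have "(\<Sum>\<tau>\<in>PiE (\<Union>k\<in>K. I k) S. \<Prod>k\<in>K. f k \<tau>) = (\<Prod>k\<in>K. \<Sum>\<tau>\<in>PiE (I k) S. f k \<tau>)"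
    proof (rule insert.IH)
      show "I k \<inter> I k' = {}" if "k \<in> K" "k' \<in> K" "k \<noteq> k'" for k k'
        using insert.prems(1) that by blast
      show "f k \<tau> = f k \<tau>'" if "k \<in> K" "\<forall>x\<in>I k. \<tau> x = \<tau>' x \<and> \<tau> x \<in> S x" for k \<tau> \<tau>'
        using insert.prems(2) that by blast
    qed
    then show ?thesis using insert.hyps by simp
  qed
  finally show ?case .
qed

lemma sum_PiE_delta:
  assumes "c \<in> PiE K S" "finite K" "\<And>i. finite (S i)"
  shows "(\<Sum>\<tau>\<in>PiE K S. if (\<forall>u\<in>K. \<tau> u = c u) then (1::'c::comm_semiring_1) else 0) = 1"
proof -
  have "{\<tau>\<in>PiE K S. \<forall>u\<in>K. \<tau> u = c u} = {c}"
    using assms by (auto simp: PiE_iff extensional_def fun_eq_iff) metis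
  moreover have "finite (PiE K S)" using assms by (simp add: finite_PiE)
  ultimately show ?thesis
    using sum.inter_filter[of "PiE K S" "\<lambda>_. 1::'c" "\<lambda>\<tau>. \<forall>u\<in>K. \<tau> u = c u"] by simp
qed

inductive_set Rch :: "'v game \<Rightarrow> 'v \<Rightarrow> ('v \<Rightarrow> 'v) \<Rightarrow> 'v set"
  for G :: "'v game" and r :: 'v and \<sigma> :: "'v \<Rightarrow> 'v" where
  R0: "r \<in> Rch G r \<sigma>"
| Ri: "v \<in> Rch G r \<sigma> \<Longrightarrow> v \<in> infosets G \<Longrightarrow> \<sigma> v \<in> Rch G r \<sigma>"
| Ra: "a \<in> Rch G r \<sigma> \<Longrightarrow> a \<in> actions G \<Longrightarrow> w \<in> ch G a \<Longrightarrow> w \<in> Rch G r \<sigma>"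

lemma reach_Rch1: "x \<in> reach G \<rho> \<Longrightarrow> \<rho> = Some \<circ> \<sigma> \<Longrightarrow> x \<in> Rch G (root G) \<sigma>"
proof (induction rule: reach.induct)
  case reach_root show ?case by (rule Rch.R0)
next
  case (reach_inf v b) 
  have "b = \<sigma> v" using reach_inf.hyps(3) reach_inf.prems by simp
  moreover have "v \<in> Rch G (root G) \<sigma>" using reach_inf.IH reach_inf.prems by simp
  ultimately show ?case using reach_inf.hyps(2) Rch.Ri by metis
next
  case (reach_act a w) then show ?case using Rch.Ra by metis
qed

lemma reach_Rch2: "x \<in> Rch G r \<sigma> \<Longrightarrow> r = root G \<Longrightarrow> x \<in> reach G (Some \<circ> \<sigma>)"
proof (induction rule: Rch.induct)
  case R0 then show ?case using reach.reach_root by metis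
next
  case (Ri v)
  then have "v \<in> reach G (Some \<circ> \<sigma>)" by metis
  moreover have "(Some \<circ> \<sigma>) v = Some (\<sigma> v)" by simp
  ultimately show ?case using Ri.hyps(2) reach.reach_inf by metis
next
  case (Ra a w) then show ?case using reach.reach_act by metis
qed

lemma reach_Rch: "reach G (Some \<circ> \<sigma>) = Rch G (root G) \<sigma>"
proof (intro equalityI subsetI)
  fix x assume "x \<in> reach G (Some \<circ> \<sigma>)" then show "x \<in> Rch G (root G) \<sigma>" by (rule reach_Rch1) simp
next
  fix x assume "x \<in> Rch G (root G) \<sigma>" then show "x \<in> reach G (Some \<circ> \<sigma>)" by (rule reach_Rch2) simp
qed

lemma reach_reduce1: "x \<in> reach G \<rho> \<Longrightarrow> \<rho> = reduce G \<sigma> \<Longrightarrow> x \<in> reach G (Some \<circ> \<sigma>)"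
proof (induction rule: reach.induct)
  case reach_root show ?case by (rule reach.reach_root)
next
  case (reach_inf v b)
  have "b = \<sigma> v" using reach_inf.hyps(3) reach_inf.prems by (simp add: reduce_def split: if_splits)
  moreover have "v \<in> reach G (Some \<circ> \<sigma>)" using reach_inf.IH reach_inf.prems by metis
  moreover have "(Some \<circ> \<sigma>) v = Some (\<sigma> v)" by simp
  ultimately show ?case using reach_inf.hyps(2) reach.reach_inf by metis
next
  case (reach_act a w) then show ?case using reach.reach_act by metis
qed

lemma reach_reduce2: "x \<in> reach G \<rho> \<Longrightarrow> \<rho> = Some \<circ> \<sigma> \<Longrightarrow> x \<in> reach G (reduce G \<sigma>)"
proof (induction rule: reach.induct)
  case reach_root show ?case by (rule reach.reach_root)
next
  case (reach_inf v b)
  have "b = \<sigma> v" using reach_inf.hyps(3) reach_inf.prems by simp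
  moreover have v: "v \<in> reach G (Some \<circ> \<sigma>)" using reach_inf.hyps(1) reach_inf.prems by metis
  moreover have "v \<in> reach G (reduce G \<sigma>)" using reach_inf.IH reach_inf.prems by metis
  moreover have "reduce G \<sigma> v = Some (\<sigma> v)" using v reach_inf.hyps(2) by (simp add: reduce_def)
  ultimately show ?case using reach_inf.hyps(2) reach.reach_inf by metis
next
  case (reach_act a w) then show ?case using reach.reach_act by metis
qed

lemma reach_reduce_Rch: "reach G (reduce G \<sigma>) = Rch G (root G) \<sigma>"
proof -
  have "reach G (reduce G \<sigma>) = reach G (Some \<circ> \<sigma>)"
  proof (intro equalityI subsetI)
    fix x assume "x \<in> reach G (reduce G \<sigma>)" then show "x \<in> reach G (Some \<circ> \<sigma>)" by (rule reach_reduce1) simp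
  next
    fix x assume "x \<in> reach G (Some \<circ> \<sigma>)" then show "x \<in> reach G (reduce G \<sigma>)" by (rule reach_reduce2) simp
  qed
  then show ?thesis by (simp add: reach_Rch)
qed

lemma Rch_cong1: "(\<forall>u\<in>infosets G \<inter> Rch G v \<sigma>. \<sigma> u = \<sigma>' u) \<Longrightarrow> Rch G v \<sigma> \<subseteq> Rch G v \<sigma>'"
proof
  fix x assume h: "\<forall>u\<in>infosets G \<inter> Rch G v \<sigma>. \<sigma> u = \<sigma>' u" and x: "x \<in> Rch G v \<sigma>"
  from x show "x \<in> Rch G v \<sigma>'"
  proof induction
    case R0 show ?case by (rule Rch.R0)
  next
    case (Ri u)
    have "\<sigma> u = \<sigma>' u" using h Ri.hyps by blast
    then show ?case using Ri.IH Ri.hyps(2) Rch.Ri by metis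
  next
    case (Ra a w) then show ?case using Rch.Ra by metis
  qed
qed

lemma Rch_cong2: "(\<forall>u\<in>infosets G \<inter> Rch G v \<sigma>. \<sigma> u = \<sigma>' u) \<Longrightarrow> Rch G v \<sigma>' \<subseteq> Rch G v \<sigma>"
proof
  fix x assume h: "\<forall>u\<in>infosets G \<inter> Rch G v \<sigma>. \<sigma> u = \<sigma>' u" and x: "x \<in> Rch G v \<sigma>'"
  from x show "x \<in> Rch G v \<sigma>"
  proof induction
    case R0 show ?case by (rule Rch.R0)
  next
    case (Ri u)
    have "\<sigma> u = \<sigma>' u" using h Ri.IH Ri.hyps(2) by blast
    then show ?case using Ri.IH Ri.hyps(2) Rch.Ri by metis
  next
    case (Ra a w) then show ?case using Rch.Ra by metis
  qed
qed

lemma Rch_cong: "(\<forall>u\<in>infosets G \<inter> Rch G v \<sigma>. \<sigma> u = \<sigma>' u) \<Longrightarrow> Rch G v \<sigma>' = Rch G v \<sigma>"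
  using Rch_cong1 Rch_cong2 by (metis subset_antisym)

lemma Rch_trans: "w \<in> Rch G v \<sigma> \<Longrightarrow> Rch G w \<sigma> \<subseteq> Rch G v \<sigma>"
proof
  fix x assume w: "w \<in> Rch G v \<sigma>" and x: "x \<in> Rch G w \<sigma>"
  from x show "x \<in> Rch G v \<sigma>"
  proof induction
    case R0 show ?case by (rule w)
  next
    case (Ri u) then show ?case using Rch.Ri by metis
  next
    case (Ra a y) then show ?case using Rch.Ra by metis
  qed
qed

context gt begin

lemma Rch_unfold_N: "u \<in> N \<Longrightarrow> Rch G u \<sigma> = insert u (Rch G (\<sigma> u) \<sigma>)"
proof
  assume u: "u \<in> N"
  show "Rch G u \<sigma> \<subseteq> insert u (Rch G (\<sigma> u) \<sigma>)"
  proof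
    fix x assume "x \<in> Rch G u \<sigma>"
    then show "x \<in> insert u (Rch G (\<sigma> u) \<sigma>)"
    proof induction
      case R0 then show ?case by simp
    next
      case (Ri v)
      then show ?case by (metis Rch.R0 Rch.Ri insert_iff)
    next
      case (Ra a w)
      then have "a \<noteq> u" using u NA_disj by blast
      then show ?case using Ra by (metis Rch.Ra insert_iff)
    qed
  qed
  have "\<sigma> u \<in> Rch G u \<sigma>" using u by (meson Rch.R0 Rch.Ri)
  then show "insert u (Rch G (\<sigma> u) \<sigma>) \<subseteq> Rch G u \<sigma>"
    using Rch_trans Rch.R0 by (metis insert_subset)
qed

lemma Rch_unfold_A: "u \<in> A \<Longrightarrow> Rch G u \<sigma> = insert u (\<Union>w\<in>ch G u. Rch G w \<sigma>)"
proof
  assume u: "u \<in> A"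
  show "Rch G u \<sigma> \<subseteq> insert u (\<Union>w\<in>ch G u. Rch G w \<sigma>)"
  proof
    fix x assume "x \<in> Rch G u \<sigma>"
    then show "x \<in> insert u (\<Union>w\<in>ch G u. Rch G w \<sigma>)"
    proof induction
      case R0 then show ?case by simp
    next
      case (Ri v)
      then have "v \<noteq> u" using u NA_disj by blast
      then obtain w where w: "w \<in> ch G u" "v \<in> Rch G w \<sigma>" using Ri.IH by blast
      have "\<sigma> v \<in> Rch G w \<sigma>" using w(2) Ri.hyps(2) by (rule Rch.Ri)
      then show ?case using w by blast
    next
      case (Ra a w)
      show ?case
      proof (cases "a = u")
        case True then show ?thesis using Ra Rch.R0[of w G \<sigma>] by blast
      next
        case False
        then obtain w' where w: "w' \<in> ch G u" "a \<in> Rch G w' \<sigma>" using Ra.IH by blast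
        have "w \<in> Rch G w' \<sigma>" using w(2) Ra.hyps(2,3) by (rule Rch.Ra)
        then show ?thesis using w by blast
      qed
    qed
  qed
  have "\<And>w. w \<in> ch G u \<Longrightarrow> Rch G w \<sigma> \<subseteq> Rch G u \<sigma>"
  proof -
    fix w assume "w \<in> ch G u"
    then have "w \<in> Rch G u \<sigma>" using Rch.Ra[OF Rch.R0 u] by blast
    then show "Rch G w \<sigma> \<subseteq> Rch G u \<sigma>" by (rule Rch_trans)
  qed
  then show "insert u (\<Union>w\<in>ch G u. Rch G w \<sigma>) \<subseteq> Rch G u \<sigma>"
    using Rch.R0 by (metis UN_least insert_subset)
qed

lemma Rch_unfold_L: "u \<notin> N \<Longrightarrow> u \<notin> A \<Longrightarrow> Rch G u \<sigma> = {u}"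
proof
  assume u: "u \<notin> N" "u \<notin> A"
  show "Rch G u \<sigma> \<subseteq> {u}"
  proof
    fix x assume "x \<in> Rch G u \<sigma>"
    then show "x \<in> {u}"
    proof induction
      case R0 then show ?case by simp
    next
      case (Ri v) then show ?case using u by simp
    next
      case (Ra a w) then show ?case using u by simp
    qed
  qed
qed (simp add: Rch.R0)

lemma Rch_D: "(\<forall>u\<in>N \<inter> D v. \<tau> u \<in> ch G u) \<Longrightarrow> Rch G v \<tau> \<subseteq> D v"
proof
  fix x assume h: "\<forall>u\<in>N \<inter> D v. \<tau> u \<in> ch G u" and x: "x \<in> Rch G v \<tau>"
  from x show "x \<in> D v"
  proof induction
    case R0 then show ?case by (rule in_D)
  next
    case (Ri u) then show ?case using h D_trans D_unfold by blast
  next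
    case (Ra a w) then show ?case using D_trans D_unfold by blast
  qed
qed

lemma Rch_cong_D: "(\<forall>u\<in>N \<inter> D v. \<tau> u \<in> ch G u) \<Longrightarrow> (\<forall>u\<in>N \<inter> D v. \<tau> u = \<tau>' u)
   \<Longrightarrow> Rch G v \<tau>' = Rch G v \<tau>"
proof -
  assume a: "\<forall>u\<in>N \<inter> D v. \<tau> u \<in> ch G u" "\<forall>u\<in>N \<inter> D v. \<tau> u = \<tau>' u"
  then have "\<forall>u\<in>N \<inter> Rch G v \<tau>. \<tau> u = \<tau>' u" using Rch_D[OF a(1)] by blast
  then show ?thesis by (rule Rch_cong)
qed

lemma anc_closed:
  assumes str: "\<forall>u\<in>N. \<sigma> u \<in> ch G u"
  shows "x \<in> Rch G r \<sigma> \<Longrightarrow> r = root G \<Longrightarrow> (w, x) \<in> E\<^sup>* \<Longrightarrow> w \<in> Rch G r \<sigma>"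
proof (induction arbitrary: w rule: Rch.induct)
  case R0
  from R0(2) have "w = r"
  proof (cases rule: rtranclE)
    case (step z) then show ?thesis using R0(1) root_nch by (simp add: edge_iff)
  qed simp
  then show ?case by (simp add: Rch.R0)
next
  case (Ri v)
  from Ri.prems(2) show ?case
  proof (cases rule: rtranclE)
    case base then show ?thesis using Ri Rch.Ri by metis
  next
    case (step z)
    then have "z = v" using str Ri.hyps(2) par_unique by (auto simp: edge_iff)
    then show ?thesis using step Ri.IH Ri.prems by blast
  qed
next
  case (Ra a y)
  from Ra.prems(2) show ?case
  proof (cases rule: rtranclE)
    case base then show ?thesis using Ra Rch.Ra by metis
  next
    case (step z)
    then have "z = a" using Ra.hyps par_unique by (auto simp: edge_iff)
    then show ?thesis using step Ra.IH Ra.prems by blast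
  qed
qed

lemma Rch_parent:
  assumes str: "\<forall>u\<in>N. \<sigma> u \<in> ch G u"
    and v: "v \<in> N" and a: "a \<in> ch G v" and ne: "a \<noteq> \<sigma> v"
  shows "a \<notin> Rch G (root G) \<sigma>"
proof
  assume "a \<in> Rch G (root G) \<sigma>"
  then show False
  proof (cases rule: Rch.cases)
    case R0 then show ?thesis using a root_nch by simp
  next
    case (Ri p)
    then have "p = v" using str a par_unique by metis
    then show ?thesis using Ri ne by simp
  next
    case (Ra p)
    then have "p = v" using a par_unique by metis
    then show ?thesis using Ra v NA_disj by blast
  qed
qed

lemma D_avoid:
  assumes str: "\<forall>u\<in>N. \<sigma> u \<in> ch G u"
    and v: "v \<in> N" and a: "a \<in> ch G v" and ne: "a \<noteq> \<sigma> v"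
  shows "D a \<inter> Rch G (root G) \<sigma> = {}"
proof -
  have "x \<notin> Rch G (root G) \<sigma>" if "x \<in> D a" for x
  proof
    assume "x \<in> Rch G (root G) \<sigma>"
    then have "a \<in> Rch G (root G) \<sigma>" using anc_closed[OF str] that unfolding D_def by blast
    then show False using Rch_parent[OF assms] by blast
  qed
  then show ?thesis by blast
qed

end

context gt begin

definition K :: "'v \<Rightarrow> 'v set" where "K v = (\<Union>a\<in>ch G v. ch G a \<inter> N)"

lemma leafw: "a \<in> A \<Longrightarrow> w \<in> ch G a \<Longrightarrow> w \<notin> N \<Longrightarrow> ch G w = {} \<and> w \<notin> A"
  using chA NA_part unfolding leaves_def by blast

lemma fin_K: "finite (K v)" unfolding K_def using fin_ch by auto

lemma ND_unfold:
  assumes v: "v \<in> N"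
  shows "N \<inter> D v = insert v (\<Union>w\<in>K v. N \<inter> D w)"
proof (intro equalityI subsetI)
  fix x assume x: "x \<in> N \<inter> D v"
  show "x \<in> insert v (\<Union>w\<in>K v. N \<inter> D w)"
  proof (cases "x = v")
    case False
    then obtain a where a: "a \<in> ch G v" "x \<in> D a" using x D_unfold[of v] by blast
    have aA: "a \<in> A" using a chN v by blast
    then have "x \<noteq> a" using x NA_disj by blast
    then obtain w where w: "w \<in> ch G a" "x \<in> D w" using a D_unfold[of a] by blast
    have "w \<in> N"
    proof (rule ccontr)
      assume "w \<notin> N"
      then have "ch G w = {}" using leafw aA w by blast
      then have "D w = {w}" using D_unfold[of w] by simp
      then have "x = w" using w by simp
      then show False using x \<open>w \<notin> N\<close> by simp
    qed
    then show ?thesis using w a x unfolding K_def by blast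
  qed simp
next
  fix x assume x: "x \<in> insert v (\<Union>w\<in>K v. N \<inter> D w)"
  show "x \<in> N \<inter> D v"
  proof (cases "x = v")
    case True then show ?thesis using v in_D by blast
  next
    case False
    then obtain w a where "a \<in> ch G v" "w \<in> ch G a" "x \<in> N \<inter> D w" using x unfolding K_def by blast
    then show ?thesis using D_child by blast
  qed
qed

lemma K_sub: "w \<in> K v \<Longrightarrow> D w \<subseteq> D v"
proof -
  assume "w \<in> K v"
  then obtain a where a: "a \<in> ch G v" "w \<in> ch G a" unfolding K_def by blast
  show "D w \<subseteq> D v" using D_child[OF a(1)] D_child[OF a(2)] by (rule order_trans[rotated])
qed

lemma K_notin: "w \<in> K v \<Longrightarrow> v \<notin> D w"
proof -
  assume "w \<in> K v"
  then obtain a where a: "a \<in> ch G v" "w \<in> ch G a" unfolding K_def by blast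
  have "v \<notin> D a" by (rule D_child_notin[OF a(1)])
  then show "v \<notin> D w" using D_child[OF a(2)] by (meson subsetD)
qed

lemma K_len: "w \<in> K v \<Longrightarrow> (v, w) \<in> E ^^ 2"
proof -
  assume "w \<in> K v"
  then obtain a where a: "a \<in> ch G v" "w \<in> ch G a" unfolding K_def by blast
  have "(v, a) \<in> E" "(a, w) \<in> E" using a by (simp_all add: edge_iff)
  then show ?thesis by (simp add: numeral_2_eq_2 relcomp.relcompI)
qed

lemma K_disj:
  assumes v: "v \<in> N" and w: "w \<in> K v" and w': "w' \<in> K v" and ne: "w \<noteq> w'"
  shows "D w \<inter> D w' = {}"
proof (rule ccontr)
  assume "D w \<inter> D w' \<noteq> {}"
  then obtain x where x: "(w, x) \<in> E\<^sup>*" "(w', x) \<in> E\<^sup>*" unfolding D_def by blast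
  obtain k where k: "(w, x) \<in> E ^^ k" using x(1) rtrancl_power by blast
  obtain k' where k': "(w', x) \<in> E ^^ k'" using x(2) rtrancl_power by blast
  have vn: "v \<in> nodes G" using v NA_part by blast
  have 1: "(v, x) \<in> E ^^ (2 + k)" using K_len[OF w] k relpow_add by (metis relcomp.relcompI)
  have 2: "(v, x) \<in> E ^^ (2 + k')" using K_len[OF w'] k' relpow_add by (metis relcomp.relcompI)
  have "k = k'" using len_unique[OF vn 1 2] by simp
  then have "w = w'" using anc_unique[OF k] k' by simp
  then show False using ne by simp
qed

lemma ARch_unfold:
  assumes v: "v \<in> N" and a: "\<tau> v \<in> ch G v"
  shows "A \<inter> Rch G v \<tau> = insert (\<tau> v) (\<Union>w\<in>ch G (\<tau> v) \<inter> N. A \<inter> Rch G w \<tau>)"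
proof -
  have aA: "\<tau> v \<in> A" using a chN v by blast
  have 1: "Rch G v \<tau> = insert v (insert (\<tau> v) (\<Union>w\<in>ch G (\<tau> v). Rch G w \<tau>))"
    using Rch_unfold_N[OF v] Rch_unfold_A[OF aA] by simp
  have 2: "A \<inter> Rch G w \<tau> = {}" if "w \<in> ch G (\<tau> v)" "w \<notin> N" for w
    using Rch_unfold_L[of w \<tau>] leafw[OF aA that] that by simp
  have 3: "v \<notin> A" using v NA_disj by blast
  have "A \<inter> Rch G v \<tau> = insert (\<tau> v) (A \<inter> (\<Union>w\<in>ch G (\<tau> v). Rch G w \<tau>))"
    unfolding 1 using 3 aA by auto
  also have "A \<inter> (\<Union>w\<in>ch G (\<tau> v). Rch G w \<tau>) = (\<Union>w\<in>ch G (\<tau> v). A \<inter> Rch G w \<tau>)"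
    by auto
  also have "\<dots> = (\<Union>w\<in>ch G (\<tau> v) \<inter> N. A \<inter> Rch G w \<tau>)"
    using 2 by auto
  finally show ?thesis .
qed

end

context gt begin

definition Fw :: "('v \<Rightarrow> real) \<Rightarrow> ('v \<Rightarrow> real) \<Rightarrow> 'v \<Rightarrow> real" where
  "Fw \<pi> e v = (\<Sum>\<tau>\<in>PiE (N \<inter> D v) (ch G). (\<Prod>u\<in>N \<inter> D v. \<pi> (\<tau> u)) * (\<Prod>x\<in>A \<inter> Rch G v \<tau>. e x))"

lemma fin_ND: "finite (N \<inter> D v)" using fin_D by blast

lemma prod_ARch:
  assumes v: "v \<in> N" and val: "\<forall>u\<in>N \<inter> D v. \<tau> u \<in> ch G u"
  shows "(\<Prod>x\<in>A \<inter> Rch G v \<tau>. e x) = e (\<tau> v) * (\<Prod>w\<in>K v. if w \<in> ch G (\<tau> v) then (\<Prod>x\<in>A \<inter> Rch G w \<tau>. e x) else 1)"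
proof -
  have a: "\<tau> v \<in> ch G v" using val v in_D by blast
  have sub: "ch G (\<tau> v) \<inter> N \<subseteq> K v" using a unfolding K_def by blast
  have valw: "\<forall>u\<in>N \<inter> D w. \<tau> u \<in> ch G u" if "w \<in> K v" for w
    using val K_sub[OF that] by blast
  have RD: "A \<inter> Rch G w \<tau> \<subseteq> D w" if "w \<in> K v" for w
    using Rch_D[OF valw[OF that]] by blast
  have notin: "\<tau> v \<notin> (\<Union>w\<in>ch G (\<tau> v) \<inter> N. A \<inter> Rch G w \<tau>)"
  proof
    assume "\<tau> v \<in> (\<Union>w\<in>ch G (\<tau> v) \<inter> N. A \<inter> Rch G w \<tau>)"
    then obtain w where w: "w \<in> ch G (\<tau> v) \<inter> N" "\<tau> v \<in> A \<inter> Rch G w \<tau>" by blast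
    have "\<tau> v \<in> D w" using RD[of w] w sub by blast
    then show False using D_child_notin[of w "\<tau> v"] w by blast
  qed
  have finU: "finite (\<Union>w\<in>ch G (\<tau> v) \<inter> N. A \<inter> Rch G w \<tau>)"
    using fin_ch RD sub fin_D by (meson finite_Int finite_UN_I finite_subset subsetD)
  have "(\<Prod>x\<in>A \<inter> Rch G v \<tau>. e x) = e (\<tau> v) * (\<Prod>x\<in>(\<Union>w\<in>ch G (\<tau> v) \<inter> N. A \<inter> Rch G w \<tau>). e x)"
    unfolding ARch_unfold[of v \<tau>, OF v a] using notin finU by simp
  also have "(\<Prod>x\<in>(\<Union>w\<in>ch G (\<tau> v) \<inter> N. A \<inter> Rch G w \<tau>). e x)
      = (\<Prod>w\<in>ch G (\<tau> v) \<inter> N. \<Prod>x\<in>A \<inter> Rch G w \<tau>. e x)"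
  proof (rule prod.UNION_disjoint)
    show "finite (ch G (\<tau> v) \<inter> N)" using fin_ch by blast
    show "\<forall>w\<in>ch G (\<tau> v) \<inter> N. finite (A \<inter> Rch G w \<tau>)"
      using RD sub fin_D finite_subset by blast
    show "\<forall>w\<in>ch G (\<tau> v) \<inter> N. \<forall>w'\<in>ch G (\<tau> v) \<inter> N. w \<noteq> w' \<longrightarrow> A \<inter> Rch G w \<tau> \<inter> (A \<inter> Rch G w' \<tau>) = {}"
    proof (intro ballI impI)
      fix w w' assume ww: "w \<in> ch G (\<tau> v) \<inter> N" "w' \<in> ch G (\<tau> v) \<inter> N" "w \<noteq> w'"
      have "D w \<inter> D w' = {}" using K_disj[OF v _ _ ww(3)] ww sub by blast
      then show "A \<inter> Rch G w \<tau> \<inter> (A \<inter> Rch G w' \<tau>) = {}" using RD[of w] RD[of w'] ww sub by blast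
    qed
  qed
  also have "\<dots> = (\<Prod>w\<in>K v. if w \<in> ch G (\<tau> v) then (\<Prod>x\<in>A \<inter> Rch G w \<tau>. e x) else 1)"
  proof -
    have "{w \<in> K v. w \<in> ch G (\<tau> v)} = ch G (\<tau> v) \<inter> N" using sub unfolding K_def by blast
    then show ?thesis using prod.inter_filter[OF fin_K, of "\<lambda>w. \<Prod>x\<in>A \<inter> Rch G w \<tau>. e x" v "\<lambda>w. w \<in> ch G (\<tau> v)"]
      by simp
  qed
  finally show ?thesis .
qed

lemma prod_ND:
  assumes v: "v \<in> N"
  shows "(\<Prod>u\<in>N \<inter> D v. \<pi> (\<tau> u)) = \<pi> (\<tau> v) * (\<Prod>w\<in>K v. \<Prod>u\<in>N \<inter> D w. \<pi> (\<tau> u))"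
proof -
  have notin: "v \<notin> (\<Union>w\<in>K v. N \<inter> D w)" using K_notin by blast
  have fU: "finite (\<Union>w\<in>K v. N \<inter> D w)" using fin_K fin_ND by blast
  have "(\<Prod>u\<in>N \<inter> D v. \<pi> (\<tau> u)) = \<pi> (\<tau> v) * (\<Prod>u\<in>(\<Union>w\<in>K v. N \<inter> D w). \<pi> (\<tau> u))"
    unfolding ND_unfold[OF v] using notin fU by simp
  also have "(\<Prod>u\<in>(\<Union>w\<in>K v. N \<inter> D w). \<pi> (\<tau> u)) = (\<Prod>w\<in>K v. \<Prod>u\<in>N \<inter> D w. \<pi> (\<tau> u))"
  proof (rule prod.UNION_disjoint)
    show "finite (K v)" by (rule fin_K)
    show "\<forall>w\<in>K v. finite (N \<inter> D w)" using fin_ND by blast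
    show "\<forall>w\<in>K v. \<forall>w'\<in>K v. w \<noteq> w' \<longrightarrow> N \<inter> D w \<inter> (N \<inter> D w') = {}"
      using K_disj[OF v] by blast
  qed
  finally show ?thesis .
qed


lemma F_rec:
  assumes v: "v \<in> N" and pol: "\<forall>u\<in>N. (\<Sum>b\<in>ch G u. \<pi> b) = 1"
  shows "Fw \<pi> e v = (\<Sum>a\<in>ch G v. \<pi> a * e a * (\<Prod>w\<in>ch G a \<inter> N. Fw \<pi> e w))"
proof -
  define J where "J = (\<Union>w\<in>K v. N \<inter> D w)"
  have NDv: "N \<inter> D v = {v} \<union> J" unfolding J_def using ND_unfold[OF v] by simp
  have vJ: "{v} \<inter> J = {}" unfolding J_def using K_notin by blast
  define g where "g a w \<tau> = (\<Prod>u\<in>N \<inter> D w. \<pi> (\<tau> u)) * (if w \<in> ch G a then (\<Prod>x\<in>A \<inter> Rch G w \<tau>. e x) else 1)" for a w \<tau>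
  define H where "H a \<tau> = (\<Prod>w\<in>K v. g a w \<tau>)" for a \<tau>
  define ind where "ind a (\<tau>::'v \<Rightarrow> 'v) = (if \<tau> v = a then 1 else (0::real))" for a \<tau>
  have hterm: "(\<Prod>u\<in>N \<inter> D v. \<pi> (\<tau> u)) * (\<Prod>x\<in>A \<inter> Rch G v \<tau>. e x)
      = (\<Sum>a\<in>ch G v. ind a \<tau> * (\<pi> a * e a * H a \<tau>))" if \<tau>: "\<tau> \<in> PiE (N \<inter> D v) (ch G)" for \<tau>
  proof -
    have val: "\<forall>u\<in>N \<inter> D v. \<tau> u \<in> ch G u" using \<tau> by auto
    have a0: "\<tau> v \<in> ch G v" using val v in_D by blast
    have "(\<Sum>a\<in>ch G v. ind a \<tau> * (\<pi> a * e a * H a \<tau>)) = \<pi> (\<tau> v) * e (\<tau> v) * H (\<tau> v) \<tau>"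
    proof -
      have "(\<Sum>a\<in>ch G v. ind a \<tau> * (\<pi> a * e a * H a \<tau>)) = (\<Sum>a\<in>ch G v. if \<tau> v = a then \<pi> a * e a * H a \<tau> else 0)"
        unfolding ind_def by (intro sum.cong) auto
      also have "\<dots> = \<pi> (\<tau> v) * e (\<tau> v) * H (\<tau> v) \<tau>" using a0 fin_ch by (simp add: sum.delta)
      finally show ?thesis .
    qed
    moreover have "H (\<tau> v) \<tau> = (\<Prod>w\<in>K v. \<Prod>u\<in>N \<inter> D w. \<pi> (\<tau> u)) *
        (\<Prod>w\<in>K v. if w \<in> ch G (\<tau> v) then (\<Prod>x\<in>A \<inter> Rch G w \<tau>. e x) else 1)"
      unfolding H_def g_def by (rule prod.distrib)
    ultimately show ?thesis using prod_ND[OF v, of \<pi> \<tau>] prod_ARch[OF v val, of e] by (simp add: ac_simps)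
  qed
  have "Fw \<pi> e v = (\<Sum>\<tau>\<in>PiE (N \<inter> D v) (ch G). \<Sum>a\<in>ch G v. ind a \<tau> * (\<pi> a * e a * H a \<tau>))"
    unfolding Fw_def using hterm by (rule sum.cong[OF refl])
  also have "\<dots> = (\<Sum>a\<in>ch G v. \<pi> a * e a * (\<Sum>\<tau>\<in>PiE (N \<inter> D v) (ch G). ind a \<tau> * H a \<tau>))"
    by (subst sum.swap) (simp add: sum_distrib_left ac_simps)
  also have "\<dots> = (\<Sum>a\<in>ch G v. \<pi> a * e a * (\<Prod>w\<in>ch G a \<inter> N. Fw \<pi> e w))"
  proof (rule sum.cong[OF refl])
    fix a assume a: "a \<in> ch G v"
    have "(\<Sum>\<tau>\<in>PiE (N \<inter> D v) (ch G). ind a \<tau> * H a \<tau>)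
        = (\<Sum>\<tau>\<in>PiE {v} (ch G). ind a \<tau>) * (\<Sum>\<tau>\<in>PiE J (ch G). H a \<tau>)"
      unfolding NDv
    proof (rule sum_PiE_two[OF vJ])
      show "ind a \<tau> = ind a \<tau>'" if "\<forall>x\<in>{v}. \<tau> x = \<tau>' x \<and> \<tau> x \<in> ch G x" for \<tau> \<tau>'
        using that unfolding ind_def by simp
      show "H a \<tau> = H a \<tau>'" if h: "\<forall>x\<in>J. \<tau> x = \<tau>' x \<and> \<tau> x \<in> ch G x" for \<tau> \<tau>'
        unfolding H_def
      proof (rule prod.cong[OF refl])
        fix w assume w: "w \<in> K v"
        have sub: "N \<inter> D w \<subseteq> J" unfolding J_def using w by blast
        have "Rch G w \<tau>' = Rch G w \<tau>" using h sub by (intro Rch_cong_D) blast+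
        moreover have "(\<Prod>u\<in>N \<inter> D w. \<pi> (\<tau> u)) = (\<Prod>u\<in>N \<inter> D w. \<pi> (\<tau>' u))"
          using h sub by (intro prod.cong) auto
        ultimately show "g a w \<tau> = g a w \<tau>'" unfolding g_def by simp
      qed
    qed
    also have "(\<Sum>\<tau>\<in>PiE {v} (ch G). ind a \<tau>) = 1"
    proof -
      have c: "(\<lambda>x. if x = v then a else undefined) \<in> PiE {v} (ch G)" using a by (auto simp: PiE_iff extensional_def)
      have "(\<Sum>\<tau>\<in>PiE {v} (ch G). ind a \<tau>)
          = (\<Sum>\<tau>\<in>PiE {v} (ch G). if (\<forall>u\<in>{v}. \<tau> u = (\<lambda>x. if x = v then a else undefined) u) then 1 else 0)"
        unfolding ind_def by (intro sum.cong) auto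
      also have "\<dots> = 1" by (rule sum_PiE_delta[OF c]) (auto simp: fin_ch)
      finally show ?thesis .
    qed
    also have "(\<Sum>\<tau>\<in>PiE J (ch G). H a \<tau>) = (\<Prod>w\<in>K v. \<Sum>\<tau>\<in>PiE (N \<inter> D w) (ch G). g a w \<tau>)"
      unfolding H_def J_def
    proof (rule sum_PiE_blocks[OF fin_K])
      show "N \<inter> D w \<inter> (N \<inter> D w') = {}" if "w \<in> K v" "w' \<in> K v" "w \<noteq> w'" for w w'
        using K_disj[OF v that] by blast
      show "g a w \<tau> = g a w \<tau>'" if w: "w \<in> K v" and h: "\<forall>x\<in>N \<inter> D w. \<tau> x = \<tau>' x \<and> \<tau> x \<in> ch G x" for w \<tau> \<tau>'
      proof -
        have "Rch G w \<tau>' = Rch G w \<tau>" using h by (intro Rch_cong_D) blast+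
        moreover have "(\<Prod>u\<in>N \<inter> D w. \<pi> (\<tau> u)) = (\<Prod>u\<in>N \<inter> D w. \<pi> (\<tau>' u))"
          using h by (intro prod.cong) auto
        ultimately show ?thesis unfolding g_def by simp
      qed
    qed
    also have "\<dots> = (\<Prod>w\<in>K v. if w \<in> ch G a then Fw \<pi> e w else 1)"
    proof (rule prod.cong[OF refl])
      fix w assume w: "w \<in> K v"
      show "(\<Sum>\<tau>\<in>PiE (N \<inter> D w) (ch G). g a w \<tau>) = (if w \<in> ch G a then Fw \<pi> e w else 1)"
      proof (cases "w \<in> ch G a")
        case True then show ?thesis unfolding g_def Fw_def by simp
      next
        case False
        have "(\<Sum>\<tau>\<in>PiE (N \<inter> D w) (ch G). g a w \<tau>) = (\<Sum>\<tau>\<in>PiE (N \<inter> D w) (ch G). \<Prod>u\<in>N \<inter> D w. \<pi> (\<tau> u))"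
          unfolding g_def using False by simp
        also have "\<dots> = (\<Prod>u\<in>N \<inter> D w. \<Sum>b\<in>ch G u. \<pi> b)"
          by (rule prod_sum_PiE[symmetric]) (auto simp: fin_ND fin_ch)
        also have "\<dots> = 1" using pol by simp
        finally show ?thesis using False by simp
      qed
    qed
    also have "\<dots> = (\<Prod>w\<in>ch G a \<inter> N. Fw \<pi> e w)"
    proof -
      have "{w \<in> K v. w \<in> ch G a} = ch G a \<inter> N" using a unfolding K_def by blast
      then show ?thesis using prod.inter_filter[OF fin_K, of "Fw \<pi> e" v "\<lambda>w. w \<in> ch G a"] by simp
    qed
    finally show "\<pi> a * e a * (\<Sum>\<tau>\<in>PiE (N \<inter> D v) (ch G). ind a \<tau> * H a \<tau>) = \<pi> a * e a * (\<Prod>w\<in>ch G a \<inter> N. Fw \<pi> e w)"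
      by simp
  qed
  finally show ?thesis .
qed

end

context gt begin

definition anc :: "'v \<Rightarrow> 'v set" where "anc w = {u. (u, w) \<in> E\<^sup>*}"

lemma anc_child: "w \<in> ch G p \<Longrightarrow> anc w = insert w (anc p)"
proof (intro equalityI subsetI)
  fix u assume w: "w \<in> ch G p" and u: "u \<in> anc w"
  from u have "(u, w) \<in> E\<^sup>*" unfolding anc_def by simp
  then show "u \<in> insert w (anc p)"
  proof (cases rule: rtranclE)
    case (step z)
    then have "z = p" using w par_unique by (simp add: edge_iff)
    then show ?thesis using step unfolding anc_def by simp
  qed simp
next
  fix u assume w: "w \<in> ch G p" and u: "u \<in> insert w (anc p)"
  have "(p, w) \<in> E" using w by (simp add: edge_iff)
  then show "u \<in> anc w" using u unfolding anc_def by (auto intro: rtrancl_into_rtrancl)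
qed

lemma anc_root: "anc (root G) = {root G}"
proof (intro equalityI subsetI)
  fix u assume "u \<in> anc (root G)"
  then have "(u, root G) \<in> E\<^sup>*" unfolding anc_def by simp
  then show "u \<in> {root G}"
  proof (cases rule: rtranclE)
    case (step z) then show ?thesis using root_nch by (simp add: edge_iff)
  qed simp
qed (simp add: anc_def)

lemma fin_anc: "w \<in> nodes G \<Longrightarrow> finite (anc w)"
proof -
  assume w: "w \<in> nodes G"
  have "anc w \<subseteq> nodes G"
  proof
    fix u assume "u \<in> anc w"
    then have "(u, w) \<in> E\<^sup>*" unfolding anc_def by simp
    then show "u \<in> nodes G" using w by (cases rule: converse_rtranclE) (auto dest: E_nodes)
  qed
  then show ?thesis using fin finite_subset by blast
qed

lemma qprod_anc: "qprod G \<pi> a = (\<Prod>u\<in>A \<inter> anc a. \<pi> u)"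
  unfolding qprod_def anc_def by (simp add: Int_def)

lemma qprod_root_child:
  assumes "c \<in> ch G (root G)"
  shows "qprod G \<pi> c = \<pi> c"
proof -
  have "c \<in> A" using assms chN root_N by blast
  moreover have "anc c = {c, root G}" using anc_child[OF assms] anc_root by simp
  ultimately have "A \<inter> anc c = {c}" using root_N NA_disj by blast
  then show ?thesis by (simp add: qprod_anc)
qed

lemma qprod_step:
  assumes b: "b \<in> A" and w: "w \<in> ch G b" "w \<in> N" and c: "c \<in> ch G w"
  shows "qprod G \<pi> c = \<pi> c * qprod G \<pi> b"
proof -
  have cA: "c \<in> A" using c chN w by blast
  have "anc c = insert c (insert w (anc b))" using anc_child[OF c] anc_child[OF w(1)] by simp
  then have 1: "A \<inter> anc c = insert c (A \<inter> anc b)" using cA w(2) NA_disj by blast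
  have "c \<notin> anc b"
  proof
    assume "c \<in> anc b"
    then have "b \<in> D c" unfolding anc_def D_def by simp
    then have "b \<in> D w" using D_child[OF c] by blast
    then show False using D_child_notin[OF w(1)] by simp
  qed
  moreover have "finite (A \<inter> anc b)" using fin_anc b NA_part by blast
  ultimately show ?thesis unfolding qprod_anc 1 by simp
qed


lemma Fw_one:
  assumes e1: "\<forall>x\<in>A \<inter> D w. e x = 1" and pol: "\<forall>u\<in>N. (\<Sum>b\<in>ch G u. \<pi> b) = 1"
  shows "Fw \<pi> e w = 1"
proof -
  have "Fw \<pi> e w = (\<Sum>\<tau>\<in>PiE (N \<inter> D w) (ch G). \<Prod>u\<in>N \<inter> D w. \<pi> (\<tau> u))"
    unfolding Fw_def
  proof (rule sum.cong[OF refl])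
    fix \<tau> assume \<tau>: "\<tau> \<in> PiE (N \<inter> D w) (ch G)"
    have val: "\<forall>u\<in>N \<inter> D w. \<tau> u \<in> ch G u" using \<tau> by auto
    have "(\<Prod>x\<in>A \<inter> Rch G w \<tau>. e x) = 1" using Rch_D[OF val] e1 by (intro prod.neutral) blast
    then show "(\<Prod>u\<in>N \<inter> D w. \<pi> (\<tau> u)) * (\<Prod>x\<in>A \<inter> Rch G w \<tau>. e x) = (\<Prod>u\<in>N \<inter> D w. \<pi> (\<tau> u))" by simp
  qed
  also have "\<dots> = (\<Prod>u\<in>N \<inter> D w. \<Sum>b\<in>ch G u. \<pi> b)"
    by (rule prod_sum_PiE[symmetric]) (auto simp: fin_ND fin_ch)
  also have "\<dots> = 1" using pol by simp
  finally show ?thesis .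
qed

lemma reduce_val: "u \<in> N \<Longrightarrow> u \<in> Rch G (root G) \<sigma> \<Longrightarrow> reduce G \<sigma> u = Some (\<sigma> u)"
  unfolding reduce_def using reach_Rch[of G \<sigma>] by simp

lemma psi_F:
  fixes \<pi> d :: "'v \<Rightarrow> real" and \<eta> \<gamma> :: real
  assumes str: "\<forall>u\<in>N. \<sigma> u \<in> ch G u" and pol: "\<forall>u\<in>N. (\<Sum>b\<in>ch G u. \<pi> b) = 1"
  defines "e \<equiv> (\<lambda>a. exp (- (if a \<in> Rch G (root G) \<sigma> then \<eta> * d a / (\<gamma> * beta G a + qprod G \<pi> a) else 0)))"
  shows "v \<in> N \<Longrightarrow> v \<in> Rch G (root G) \<sigma> \<Longrightarrow> card (D v) \<le> k \<Longrightarrow> \<pi> (\<sigma> v) * x = qprod G \<pi> (\<sigma> v)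
    \<Longrightarrow> psif G \<eta> \<gamma> \<pi> (reduce G \<sigma>) d k v x = Fw \<pi> e v"
proof (induction k arbitrary: v x)
  case 0
  have "card (D v) > 0" using fin_D in_D by (metis card_gt_0_iff empty_iff)
  then show ?case using 0 by simp
next
  case (Suc k)
  define R where "R = Rch G (root G) \<sigma>"
  have vR: "v \<in> R" using Suc.prems unfolding R_def by simp
  define b where "b = \<sigma> v"
  have bch: "b \<in> ch G v" using str Suc.prems(1) unfolding b_def by blast
  have bA: "b \<in> A" using bch chN Suc.prems(1) by blast
  have bR: "b \<in> R" unfolding R_def b_def using Suc.prems(2,1) by (rule Rch.Ri)
  have the_b: "the (reduce G \<sigma> v) = b" using reduce_val[OF Suc.prems(1,2)] unfolding b_def by simp
  have IH: "psif G \<eta> \<gamma> \<pi> (reduce G \<sigma>) d k w (\<pi> b * x) = Fw \<pi> e w" if w: "w \<in> ch G b \<inter> N" for w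
  proof (rule Suc.IH)
    show "w \<in> N" using w by blast
    show wR: "w \<in> Rch G (root G) \<sigma>" using Rch.Ra[OF bR[unfolded R_def] bA] w by blast
    have "card (D w) < card (D b)" using w D_child_card by blast
    also have "\<dots> < card (D v)" using bch D_child_card by blast
    finally show "card (D w) \<le> k" using Suc.prems(3) by simp
    have c: "\<sigma> w \<in> ch G w" using str w by blast
    show "\<pi> (\<sigma> w) * (\<pi> b * x) = qprod G \<pi> (\<sigma> w)"
      using qprod_step[OF bA _ _ c, of \<pi>] w Suc.prems(4) unfolding b_def by simp
  qed
  define \<omega> where "\<omega> = exp (- \<eta> * d b / (\<gamma> * beta G b + \<pi> b * x)) * (\<Prod>w\<in>ch G b \<inter> N. Fw \<pi> e w)"
  have psi_eq: "psif G \<eta> \<gamma> \<pi> (reduce G \<sigma>) d (Suc k) v x = 1 - (1 - \<omega>) * \<pi> b"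
    unfolding \<omega>_def using IH by (simp add: the_b Let_def Int_commute)
  have eb: "e b = exp (- \<eta> * d b / (\<gamma> * beta G b + \<pi> b * x))"
    unfolding e_def using bR Suc.prems(4) unfolding R_def b_def by simp
  have e1: "e a = 1" if "a \<in> ch G v" "a \<noteq> b" for a
  proof -
    have "a \<notin> R" unfolding R_def using Rch_parent[OF str Suc.prems(1) that(1)] that(2) b_def by blast
    then show ?thesis unfolding e_def R_def by simp
  qed
  have F1: "Fw \<pi> e w = 1" if "a \<in> ch G v" "a \<noteq> b" "w \<in> ch G a \<inter> N" for a w
  proof (rule Fw_one[OF _ pol])
    have "D w \<subseteq> D a" using that D_child by blast
    then have "D w \<inter> R = {}" using D_avoid[OF str Suc.prems(1) that(1)] that(2) unfolding R_def b_def by blast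
    then show "\<forall>x\<in>A \<inter> D w. e x = 1" unfolding e_def R_def by auto
  qed
  have "Fw \<pi> e v = (\<Sum>a\<in>ch G v. \<pi> a * e a * (\<Prod>w\<in>ch G a \<inter> N. Fw \<pi> e w))"
    by (rule F_rec[OF Suc.prems(1) pol])
  also have "\<dots> = \<pi> b * e b * (\<Prod>w\<in>ch G b \<inter> N. Fw \<pi> e w) + (\<Sum>a\<in>ch G v - {b}. \<pi> a * e a * (\<Prod>w\<in>ch G a \<inter> N. Fw \<pi> e w))"
    using bch fin_ch by (simp add: sum.remove)
  also have "(\<Sum>a\<in>ch G v - {b}. \<pi> a * e a * (\<Prod>w\<in>ch G a \<inter> N. Fw \<pi> e w)) = (\<Sum>a\<in>ch G v - {b}. \<pi> a)"
    using e1 F1 by (intro sum.cong) auto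
  also have "\<dots> = 1 - \<pi> b"
    using pol Suc.prems(1) bch fin_ch by (simp add: sum_diff1)
  finally have "Fw \<pi> e v = \<pi> b * \<omega> + (1 - \<pi> b)" unfolding \<omega>_def eb by (simp add: ac_simps)
  then show ?case using psi_eq by (simp add: algebra_simps)
qed

end

context gt begin

lemma N_nodes: "N \<subseteq> nodes G" using NA_part by blast
lemma A_nodes: "A \<subseteq> nodes G" using NA_part by blast

lemma rstrats_eq: "rstrats G = reduce G ` PiE N (ch G)"
proof (intro equalityI subsetI)
  fix \<rho> assume "\<rho> \<in> rstrats G"
  then obtain \<sigma> where \<sigma>: "is_strategy G \<sigma>" "\<rho> = reduce G \<sigma>" unfolding rstrats_def by blast
  have R: "Rch G (root G) (restrict \<sigma> N) = Rch G (root G) \<sigma>" by (rule Rch_cong) simp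
  have "reduce G \<sigma> = reduce G (restrict \<sigma> N)"
    unfolding reduce_def reach_Rch R by (intro ext) simp
  moreover have "restrict \<sigma> N \<in> PiE N (ch G)" using \<sigma>(1) unfolding is_strategy_def by simp
  ultimately show "\<rho> \<in> reduce G ` PiE N (ch G)" using \<sigma>(2) by blast
next
  fix \<rho> assume "\<rho> \<in> reduce G ` PiE N (ch G)"
  then obtain \<tau> where "\<tau> \<in> PiE N (ch G)" "\<rho> = reduce G \<tau>" by blast
  moreover then have "is_strategy G \<tau>" unfolding is_strategy_def by auto
  ultimately show "\<rho> \<in> rstrats G" unfolding rstrats_def by blast
qed

lemma fiber:
  shows "reduce G \<tau> = reduce G \<tau>0 \<longleftrightarrow> (\<forall>u\<in>N \<inter> Rch G (root G) \<tau>0. \<tau> u = \<tau>0 u)"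
proof
  assume h: "reduce G \<tau> = reduce G \<tau>0"
  show "\<forall>u\<in>N \<inter> Rch G (root G) \<tau>0. \<tau> u = \<tau>0 u"
  proof
    fix u assume u: "u \<in> N \<inter> Rch G (root G) \<tau>0"
    have "reduce G \<tau>0 u = Some (\<tau>0 u)" using u reduce_val by blast
    then have "reduce G \<tau> u = Some (\<tau>0 u)" using h by simp
    then show "\<tau> u = \<tau>0 u" unfolding reduce_def by (simp split: if_splits)
  qed
next
  assume h: "\<forall>u\<in>N \<inter> Rch G (root G) \<tau>0. \<tau> u = \<tau>0 u"
  then have R: "Rch G (root G) \<tau> = Rch G (root G) \<tau>0" by (intro Rch_cong) (metis Int_iff)
  show "reduce G \<tau> = reduce G \<tau>0"
    unfolding reduce_def reach_Rch R using h by (intro ext) simp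
qed

lemma bij_reached:
  assumes str: "\<forall>u\<in>N. \<tau> u \<in> ch G u"
  shows "bij_betw \<tau> (N \<inter> Rch G (root G) \<tau>) (A \<inter> Rch G (root G) \<tau>)"
  unfolding bij_betw_def
proof
  show "inj_on \<tau> (N \<inter> Rch G (root G) \<tau>)"
    using str par_unique unfolding inj_on_def by (metis IntD1)
  show "\<tau> ` (N \<inter> Rch G (root G) \<tau>) = A \<inter> Rch G (root G) \<tau>"
  proof (intro equalityI subsetI)
    fix a assume "a \<in> \<tau> ` (N \<inter> Rch G (root G) \<tau>)"
    then obtain u where u: "u \<in> N" "u \<in> Rch G (root G) \<tau>" "a = \<tau> u" by blast
    have "a \<in> A" using u str chN by blast
    moreover have "a \<in> Rch G (root G) \<tau>" using Rch.Ri[OF u(2) u(1)] u(3) by simp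
    ultimately show "a \<in> A \<inter> Rch G (root G) \<tau>" by blast
  next
    fix a assume a: "a \<in> A \<inter> Rch G (root G) \<tau>"
    then have "a \<in> Rch G (root G) \<tau>" by blast
    then show "a \<in> \<tau> ` (N \<inter> Rch G (root G) \<tau>)"
    proof (cases rule: Rch.cases)
      case R0 then show ?thesis using a root_N NA_disj by blast
    next
      case (Ri p) then show ?thesis by blast
    next
      case (Ra p)
      then have "a \<in> N \<union> leaves G" using chA by blast
      then show ?thesis using a NA_disj NA_part by blast
    qed
  qed
qed

lemma top_sum:
  fixes \<pi> \<theta> :: "'v \<Rightarrow> real"
  assumes pol: "\<forall>u\<in>N. (\<Sum>b\<in>ch G u. \<pi> b) = 1"
  shows "(\<Sum>\<rho>\<in>rstrats G. (\<Prod>a\<in>Aof G \<rho>. \<pi> a) * exp (- (\<Sum>a\<in>Aof G \<rho>. \<theta> a)))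
       = Fw \<pi> (\<lambda>a. exp (- \<theta> a)) (root G)"
proof -
  define P where "P = PiE N (ch G)"
  define e where "e a = exp (- \<theta> a)" for a
  define \<Phi> where "\<Phi> \<tau> = (\<Prod>u\<in>N. \<pi> (\<tau> u)) * (\<Prod>x\<in>A \<inter> Rch G (root G) \<tau>. e x)" for \<tau>
  have finP: "finite P" unfolding P_def using fin N_nodes fin_ch by (intro finite_PiE) (auto intro: finite_subset)
  have ND: "N \<inter> D (root G) = N" using D_root N_nodes by blast
  have F: "Fw \<pi> (\<lambda>a. exp (- \<theta> a)) (root G) = (\<Sum>\<tau>\<in>P. \<Phi> \<tau>)"
    unfolding Fw_def ND P_def \<Phi>_def e_def ..
  have "(\<Sum>\<tau>\<in>P. \<Phi> \<tau>) = (\<Sum>\<rho>\<in>reduce G ` P. \<Sum>\<tau>\<in>{\<tau>\<in>P. reduce G \<tau> = \<rho>}. \<Phi> \<tau>)"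
    using sum.group[OF finP finite_imageI[OF finP], where g="reduce G" and h=\<Phi>] by simp
  also have "\<dots> = (\<Sum>\<rho>\<in>reduce G ` P. (\<Prod>a\<in>Aof G \<rho>. \<pi> a) * exp (- (\<Sum>a\<in>Aof G \<rho>. \<theta> a)))"
  proof (rule sum.cong[OF refl])
    fix \<rho> assume "\<rho> \<in> reduce G ` P"
    then obtain \<tau>0 where \<tau>0: "\<tau>0 \<in> P" "\<rho> = reduce G \<tau>0" by blast
    define R where "R = Rch G (root G) \<tau>0"
    define Ks where "Ks = N \<inter> R"
    have str0: "\<forall>u\<in>N. \<tau>0 u \<in> ch G u" using \<tau>0 unfolding P_def by auto
    have Aof: "Aof G \<rho> = A \<inter> R" unfolding Aof_def \<tau>0(2) R_def reach_reduce_Rch ..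
    have finAR: "finite (A \<inter> R)" using fin A_nodes finite_subset by blast
    have fib: "{\<tau>\<in>P. reduce G \<tau> = \<rho>} = {\<tau>\<in>P. \<forall>u\<in>Ks. \<tau> u = \<tau>0 u}"
      unfolding \<tau>0(2) Ks_def R_def using fiber by blast
    define C where "C = (\<Prod>a\<in>A \<inter> R. \<pi> a) * (\<Prod>a\<in>A \<inter> R. e a)"
    have KsN: "Ks \<subseteq> N" unfolding Ks_def by blast
    have finN: "finite N" using fin N_nodes finite_subset by blast
    have phi: "\<Phi> \<tau> = C * (\<Prod>u\<in>N - Ks. \<pi> (\<tau> u))" if "\<tau> \<in> P" "\<forall>u\<in>Ks. \<tau> u = \<tau>0 u" for \<tau>
    proof -
      have R\<tau>: "Rch G (root G) \<tau> = R" unfolding R_def using that(2) unfolding Ks_def R_def by (intro Rch_cong) (simp add: Ks_def R_def)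
      have "(\<Prod>u\<in>N. \<pi> (\<tau> u)) = (\<Prod>u\<in>Ks. \<pi> (\<tau> u)) * (\<Prod>u\<in>N - Ks. \<pi> (\<tau> u))"
        using prod.subset_diff[OF KsN finN] by (simp add: ac_simps)
      also have "(\<Prod>u\<in>Ks. \<pi> (\<tau> u)) = (\<Prod>u\<in>Ks. \<pi> (\<tau>0 u))" using that(2) by simp
      also have "\<dots> = (\<Prod>a\<in>A \<inter> R. \<pi> a)"
        using prod.reindex_bij_betw[OF bij_reached[OF str0], of \<pi>] unfolding Ks_def R_def by simp
      finally show ?thesis unfolding \<Phi>_def C_def R\<tau> by (simp add: ac_simps)
    qed
    have "(\<Sum>\<tau>\<in>{\<tau>\<in>P. reduce G \<tau> = \<rho>}. \<Phi> \<tau>) = (\<Sum>\<tau>\<in>{\<tau>\<in>P. \<forall>u\<in>Ks. \<tau> u = \<tau>0 u}. C * (\<Prod>u\<in>N - Ks. \<pi> (\<tau> u)))"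
      unfolding fib using phi by (intro sum.cong) auto
    also have "\<dots> = C * (\<Sum>\<tau>\<in>{\<tau>\<in>P. \<forall>u\<in>Ks. \<tau> u = \<tau>0 u}. \<Prod>u\<in>N - Ks. \<pi> (\<tau> u))"
      by (simp add: sum_distrib_left)
    also have "(\<Sum>\<tau>\<in>{\<tau>\<in>P. \<forall>u\<in>Ks. \<tau> u = \<tau>0 u}. \<Prod>u\<in>N - Ks. \<pi> (\<tau> u))
        = (\<Sum>\<tau>\<in>P. (if \<forall>u\<in>Ks. \<tau> u = \<tau>0 u then 1 else 0) * (\<Prod>u\<in>N - Ks. \<pi> (\<tau> u)))"
      by (subst sum.inter_filter[OF finP]) (intro sum.cong, auto)
    also have "(\<Sum>\<tau>\<in>P. (if \<forall>u\<in>Ks. \<tau> u = \<tau>0 u then 1 else 0) * (\<Prod>u\<in>N - Ks. \<pi> (\<tau> u)))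
        = (\<Sum>\<tau>\<in>PiE Ks (ch G). if \<forall>u\<in>Ks. \<tau> u = \<tau>0 u then 1 else 0) * (\<Sum>\<tau>\<in>PiE (N - Ks) (ch G). \<Prod>u\<in>N - Ks. \<pi> (\<tau> u))"
    proof -
      have NK: "N = Ks \<union> (N - Ks)" using KsN by blast
      show ?thesis unfolding P_def
        by (subst NK, rule sum_PiE_two) auto
    qed
    also have "(\<Sum>\<tau>\<in>PiE Ks (ch G). if \<forall>u\<in>Ks. \<tau> u = \<tau>0 u then 1 else 0) = (1::real)"
    proof -
      have c: "restrict \<tau>0 Ks \<in> PiE Ks (ch G)" using str0 KsN by auto
      have "(\<Sum>\<tau>\<in>PiE Ks (ch G). if \<forall>u\<in>Ks. \<tau> u = \<tau>0 u then 1 else 0)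
          = (\<Sum>\<tau>\<in>PiE Ks (ch G). if \<forall>u\<in>Ks. \<tau> u = restrict \<tau>0 Ks u then 1 else (0::real))"
        by simp
      also have "\<dots> = 1" by (rule sum_PiE_delta[OF c]) (use finN KsN finite_subset fin_ch in auto)
      finally show ?thesis .
    qed
    also have "(\<Sum>\<tau>\<in>PiE (N - Ks) (ch G). \<Prod>u\<in>N - Ks. \<pi> (\<tau> u)) = (\<Prod>u\<in>N - Ks. \<Sum>b\<in>ch G u. \<pi> b)"
      by (rule prod_sum_PiE[symmetric]) (use finN fin_ch in auto)
    also have "\<dots> = 1" using pol by simp
    also have "C = (\<Prod>a\<in>Aof G \<rho>. \<pi> a) * exp (- (\<Sum>a\<in>Aof G \<rho>. \<theta> a))"
      unfolding C_def Aof e_def using finAR by (simp add: exp_sum sum_negf[symmetric])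
    finally show "(\<Sum>\<tau>\<in>{\<tau>\<in>P. reduce G \<tau> = \<rho>}. \<Phi> \<tau>) = (\<Prod>a\<in>Aof G \<rho>. \<pi> a) * exp (- (\<Sum>a\<in>Aof G \<rho>. \<theta> a))"
      by simp
  qed
  finally show ?thesis unfolding F rstrats_eq P_def[symmetric] by simp
qed

end

context gt begin

definition Inv :: "('v \<Rightarrow> real) \<Rightarrow> bool" where
  "Inv \<pi> \<longleftrightarrow> (\<forall>a\<in>A. 0 < \<pi> a) \<and> (\<forall>u\<in>N. (\<Sum>b\<in>ch G u. \<pi> b) = 1)"

lemma act_par: "a \<in> A \<Longrightarrow> \<exists>p\<in>N. a \<in> ch G p"
proof -
  assume a: "a \<in> A"
  have an: "a \<in> nodes G" "a \<noteq> root G" using a A_nodes root_N NA_disj by blast+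
  then obtain p where p: "p \<in> nodes G" "a \<in> ch G p" using upar by blast
  have "p \<notin> leaves G" using p unfolding leaves_def by blast
  then have "p \<in> N \<or> p \<in> A" using p NA_part by blast
  moreover have "p \<notin> A"
  proof
    assume "p \<in> A"
    then have "a \<in> N \<union> leaves G" using chA p by blast
    then show False using a NA_disj NA_part by blast
  qed
  ultimately show ?thesis using p by blast
qed

lemma Inv_le1: "Inv \<pi> \<Longrightarrow> v \<in> N \<Longrightarrow> b \<in> ch G v \<Longrightarrow> \<pi> b \<le> 1"
proof -
  assume I: "Inv \<pi>" and v: "v \<in> N" and b: "b \<in> ch G v"
  have "\<forall>a\<in>ch G v. 0 \<le> \<pi> a" using I chN v unfolding Inv_def by (meson less_imp_le subsetD)
  then have "\<pi> b \<le> (\<Sum>a\<in>ch G v. \<pi> a)" using b fin_ch by (intro member_le_sum) auto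
  then show ?thesis using I v unfolding Inv_def by simp
qed

lemma nfun_pos: "u \<in> N \<union> A \<Longrightarrow> 0 < nfun G k u"
proof (induction k arbitrary: u)
  case 0 then show ?case by simp
next
  case (Suc k)
  show ?case
  proof (cases "u \<in> A")
    case True
    have "\<forall>w\<in>ch G u \<inter> N. 0 < nfun G k w" using Suc.IH by blast
    then have "0 < prod (nfun G k) (ch G u \<inter> N)" by (intro prod_pos) blast
    then show ?thesis using True by simp
  next
    case False
    then have uN: "u \<in> N" using Suc.prems by blast
    have "\<forall>a\<in>ch G u. 0 < nfun G k a" using Suc.IH chN[OF uN] by blast
    moreover have "ch G u \<noteq> {}" using chN_ne[OF uN] .
    ultimately show ?thesis using False fin_ch by (simp add: sum_pos)
  qed
qed

lemma nfun_stable: "card (D u) \<le> k \<Longrightarrow> card (D u) \<le> k' \<Longrightarrow> nfun G k u = nfun G k' u"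
proof (induction k arbitrary: u k')
  case 0
  have "card (D u) > 0" using fin_D in_D by (metis card_gt_0_iff empty_iff)
  then show ?case using 0 by simp
next
  case (Suc k)
  have "card (D u) > 0" using fin_D in_D by (metis card_gt_0_iff empty_iff)
  then obtain k'' where k': "k' = Suc k''" using Suc.prems(2) by (cases k') auto
  have ch: "nfun G k w = nfun G k'' w" if "w \<in> ch G u" for w
    using Suc.IH D_child_card[OF that] Suc.prems k' by simp
  have "prod (nfun G k) (ch G u \<inter> N) = prod (nfun G k'') (ch G u \<inter> N)"
    using ch by (intro prod.cong) auto
  moreover have "sum (nfun G k) (ch G u) = sum (nfun G k'') (ch G u)"
    using ch by (intro sum.cong) auto
  ultimately show ?case unfolding k' by simp
qed

lemma nn_sum: "v \<in> N \<Longrightarrow> nn G v = (\<Sum>a\<in>ch G v. nn G a)"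
proof -
  assume v: "v \<in> N"
  have vn: "v \<in> nodes G" using v N_nodes by blast
  have cD: "card (D v) \<le> card (nodes G)" using D_sub vn fin by (metis card_mono insert_absorb)
  have "card (nodes G) > 0" using fin vn card_gt_0_iff by blast
  then obtain m where m: "card (nodes G) = Suc m" using gr0_implies_Suc by blast
  have "nn G v = (\<Sum>a\<in>ch G v. nfun G m a)"
    unfolding nn_def m using v NA_disj by auto
  also have "\<dots> = (\<Sum>a\<in>ch G v. nn G a)"
  proof (rule sum.cong[OF refl])
    fix a assume a: "a \<in> ch G v"
    have "card (D a) < card (D v)" using D_child_card[OF a] .
    then show "nfun G m a = nn G a" unfolding nn_def m using cD m by (intro nfun_stable) auto
  qed
  finally show ?thesis .
qed

lemma Inv_init: "Inv (pol_init G)"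
  unfolding Inv_def
proof
  show "\<forall>a\<in>A. 0 < pol_init G a"
  proof
    fix a assume a: "a \<in> A"
    obtain p where p: "p \<in> N" "a \<in> ch G p" using act_par[OF a] by blast
    have "0 < nn G a" unfolding nn_def using a by (intro nfun_pos) blast
    moreover have "0 < nn G (par G a)" unfolding nn_def par_eq[OF p(2)] using p by (intro nfun_pos) blast
    ultimately show "0 < pol_init G a" using a unfolding pol_init_def by simp
  qed
  show "\<forall>u\<in>N. (\<Sum>b\<in>ch G u. pol_init G b) = 1"
  proof
    fix u assume u: "u \<in> N"
    have pos: "0 < nn G u" unfolding nn_def using u by (intro nfun_pos) blast
    have "(\<Sum>b\<in>ch G u. pol_init G b) = (\<Sum>b\<in>ch G u. real (nn G b) / real (nn G u))"
      using chN[OF u] par_eq unfolding pol_init_def by (intro sum.cong) auto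
    also have "\<dots> = real (\<Sum>b\<in>ch G u. nn G b) / real (nn G u)"
      by (simp add: sum_divide_distrib)
    also have "\<dots> = 1" using nn_sum[OF u] pos by (simp del: of_nat_sum)
    finally show "(\<Sum>b\<in>ch G u. pol_init G b) = 1" .
  qed
qed

lemma psif_pos:
  assumes I: "Inv \<pi>" and str: "\<forall>u\<in>N. \<sigma> u \<in> ch G u"
  shows "v \<in> N \<Longrightarrow> v \<in> Rch G (root G) \<sigma> \<Longrightarrow> 0 < psif G \<eta> \<gamma> \<pi> (reduce G \<sigma>) d k v x"
proof (induction k arbitrary: v x)
  case 0 then show ?case by simp
next
  case (Suc k)
  define b where "b = \<sigma> v"
  have bch: "b \<in> ch G v" using str Suc.prems(1) unfolding b_def by blast
  have bA: "b \<in> A" using bch chN Suc.prems(1) by blast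
  have bR: "b \<in> Rch G (root G) \<sigma>" unfolding b_def using Suc.prems(2,1) by (rule Rch.Ri)
  have the_b: "the (reduce G \<sigma> v) = b" using reduce_val[OF Suc.prems(1,2)] unfolding b_def by simp
  define \<omega> where "\<omega> = exp (- \<eta> * d b / (\<gamma> * beta G b + \<pi> b * x)) *
      (\<Prod>v'\<in>ch G b \<inter> N. psif G \<eta> \<gamma> \<pi> (reduce G \<sigma>) d k v' (\<pi> b * x))"
  have "\<forall>v'\<in>ch G b \<inter> N. 0 < psif G \<eta> \<gamma> \<pi> (reduce G \<sigma>) d k v' (\<pi> b * x)"
  proof
    fix v' assume v': "v' \<in> ch G b \<inter> N"
    have "v' \<in> Rch G (root G) \<sigma>" using Rch.Ra[OF bR bA] v' by blast
    then show "0 < psif G \<eta> \<gamma> \<pi> (reduce G \<sigma>) d k v' (\<pi> b * x)" using Suc.IH v' by blast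
  qed
  then have "0 < (\<Prod>v'\<in>ch G b \<inter> N. psif G \<eta> \<gamma> \<pi> (reduce G \<sigma>) d k v' (\<pi> b * x))"
    by (intro prod_pos) blast
  then have \<omega>pos: "0 < \<omega>" unfolding \<omega>_def by simp
  have pb: "0 < \<pi> b" "\<pi> b \<le> 1" using I bA Inv_le1[OF I Suc.prems(1) bch] unfolding Inv_def by auto
  have "psif G \<eta> \<gamma> \<pi> (reduce G \<sigma>) d (Suc k) v x = 1 - (1 - \<omega>) * \<pi> b"
    unfolding \<omega>_def by (simp add: the_b Let_def)
  also have "\<dots> = (1 - \<pi> b) + \<omega> * \<pi> b" by (simp add: algebra_simps)
  also have "\<dots> > 0" using pb \<omega>pos by (simp add: add_nonneg_pos)
  finally show ?case .
qed

end

context gt begin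

lemma Inv_update:
  assumes I: "Inv \<pi>" and \<sigma>: "\<sigma> \<in> rstrats G"
  shows "Inv (pol_update G \<eta> \<gamma> \<pi> \<sigma> d)"
proof -
  obtain \<sigma>1 where s1: "is_strategy G \<sigma>1" "\<sigma> = reduce G \<sigma>1" using \<sigma> unfolding rstrats_def by blast
  have str: "\<forall>u\<in>N. \<sigma>1 u \<in> ch G u" using s1(1) unfolding is_strategy_def by blast
  define R where "R = Rch G (root G) \<sigma>1"
  have Nof: "Nof G \<sigma> = N \<inter> R" unfolding Nof_def s1(2) reach_reduce_Rch R_def ..
  define \<omega> where "\<omega> v = omegaf G \<eta> \<gamma> \<pi> \<sigma> d v (xarg G \<pi> v)" for v
  define den where "den v = 1 - (1 - \<omega> v) * \<pi> (\<sigma>1 v)" for v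
  have theb: "the (\<sigma> v) = \<sigma>1 v" if "v \<in> N \<inter> R" for v
    using reduce_val that unfolding s1(2) R_def by simp
  have \<omega>pos: "0 < \<omega> v" if v: "v \<in> N \<inter> R" for v
  proof -
    have bR: "\<sigma>1 v \<in> R" unfolding R_def using v[unfolded R_def] by (meson IntD1 IntD2 Rch.Ri)
    have bA: "\<sigma>1 v \<in> A" using str v chN by blast
    have "\<forall>v'\<in>ch G (\<sigma>1 v) \<inter> N. 0 < psif G \<eta> \<gamma> \<pi> \<sigma> d (card (nodes G)) v' (\<pi> (\<sigma>1 v) * xarg G \<pi> v)"
    proof
      fix v' assume v': "v' \<in> ch G (\<sigma>1 v) \<inter> N"
      have "v' \<in> R" using Rch.Ra[OF bR[unfolded R_def] bA] v' unfolding R_def by blast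
      then show "0 < psif G \<eta> \<gamma> \<pi> \<sigma> d (card (nodes G)) v' (\<pi> (\<sigma>1 v) * xarg G \<pi> v)"
        unfolding s1(2) using psif_pos[OF I str] v' unfolding R_def by blast
    qed
    then have "0 < (\<Prod>v'\<in>ch G (\<sigma>1 v) \<inter> N. psif G \<eta> \<gamma> \<pi> \<sigma> d (card (nodes G)) v' (\<pi> (\<sigma>1 v) * xarg G \<pi> v))"
      by (intro prod_pos) blast
    then show ?thesis unfolding \<omega>_def omegaf_def Let_def theb[OF v] by (simp add: Int_commute)
  qed
  have pb: "0 < \<pi> (\<sigma>1 v)" "\<pi> (\<sigma>1 v) \<le> 1" if v: "v \<in> N" for v
    using I str v chN Inv_le1[OF I v] unfolding Inv_def by blast+
  have denpos: "0 < den v" if v: "v \<in> N \<inter> R" for v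
  proof -
    have "den v = (1 - \<pi> (\<sigma>1 v)) + \<omega> v * \<pi> (\<sigma>1 v)" unfolding den_def by (simp add: algebra_simps)
    then show ?thesis using pb[of v] \<omega>pos[OF v] v by (simp add: add_nonneg_pos)
  qed
  have upd: "pol_update G \<eta> \<gamma> \<pi> \<sigma> d a = (if par G a \<in> N \<inter> R then
      (if a = \<sigma>1 (par G a) then \<omega> (par G a) * \<pi> a else \<pi> a) / den (par G a) else \<pi> a)" if a: "a \<in> A" for a
    unfolding pol_update_def Nof using a theb by (simp add: Let_def \<omega>_def den_def)
  show ?thesis
    unfolding Inv_def
  proof
    show "\<forall>a\<in>A. 0 < pol_update G \<eta> \<gamma> \<pi> \<sigma> d a"
    proof
      fix a assume a: "a \<in> A"
      have pa: "0 < \<pi> a" using I a unfolding Inv_def by blast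
      show "0 < pol_update G \<eta> \<gamma> \<pi> \<sigma> d a"
      proof (cases "par G a \<in> N \<inter> R")
        case True
        then show ?thesis unfolding upd[OF a] using pa \<omega>pos[OF True] denpos[OF True] by simp
      next
        case False
        have "pol_update G \<eta> \<gamma> \<pi> \<sigma> d a = \<pi> a" using upd[OF a] False by (simp only: if_False)
        then show ?thesis using pa by simp
      qed
    qed
    show "\<forall>u\<in>N. (\<Sum>b\<in>ch G u. pol_update G \<eta> \<gamma> \<pi> \<sigma> d b) = 1"
    proof
      fix u assume u: "u \<in> N"
      have pu: "par G a = u" if "a \<in> ch G u" for a using par_eq that by blast
      have aA: "a \<in> A" if "a \<in> ch G u" for a using chN u that by blast
      have s1: "(\<Sum>b\<in>ch G u. \<pi> b) = 1" using I u unfolding Inv_def by blast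
      show "(\<Sum>b\<in>ch G u. pol_update G \<eta> \<gamma> \<pi> \<sigma> d b) = 1"
      proof (cases "u \<in> R")
        case False
        then have "(\<Sum>b\<in>ch G u. pol_update G \<eta> \<gamma> \<pi> \<sigma> d b) = (\<Sum>b\<in>ch G u. \<pi> b)"
          using upd aA pu by (intro sum.cong) auto
        then show ?thesis using s1 by simp
      next
        case True
        then have uNR: "u \<in> N \<inter> R" using u by blast
        define b where "b = \<sigma>1 u"
        have bch: "b \<in> ch G u" using str u unfolding b_def by blast
        have "(\<Sum>a\<in>ch G u. pol_update G \<eta> \<gamma> \<pi> \<sigma> d a)
            = (\<Sum>a\<in>ch G u. (if a = b then \<omega> u * \<pi> a else \<pi> a) / den u)"
          using upd aA pu uNR unfolding b_def by (intro sum.cong) auto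
        also have "\<dots> = (\<Sum>a\<in>ch G u. (if a = b then \<omega> u * \<pi> a else \<pi> a)) / den u"
          by (simp add: sum_divide_distrib)
        also have "(\<Sum>a\<in>ch G u. (if a = b then \<omega> u * \<pi> a else \<pi> a))
            = \<omega> u * \<pi> b + (\<Sum>a\<in>ch G u - {b}. \<pi> a)"
          using bch fin_ch by (simp add: sum.remove)
        also have "(\<Sum>a\<in>ch G u - {b}. \<pi> a) = 1 - \<pi> b"
          using s1 bch fin_ch by (simp add: sum_diff1)
        also have "\<omega> u * \<pi> b + (1 - \<pi> b) = den u" unfolding den_def b_def by (simp add: algebra_simps)
        finally show ?thesis using denpos[OF uNR] by simp
      qed
    qed
  qed
qed

lemma Inv_pol:
  assumes "\<And>s. s \<in> {1..T} \<Longrightarrow> sig s \<in> rstrats G"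
  shows "k \<le> T \<Longrightarrow> Inv (pol G T \<epsilon> sig d k)"
proof (induction k)
  case 0 then show ?case by (simp add: Inv_init)
next
  case (Suc k)
  have "sig (Suc k) \<in> rstrats G" using assms Suc.prems by simp
  then show ?case using Inv_update Suc by simp
qed

end


theorem mainTheorem10:
  fixes G :: "'v game" and T :: nat and \<epsilon> :: real
    and sig :: "nat \<Rightarrow> 'v \<Rightarrow> 'v option" and d :: "nat \<Rightarrow> 'v \<Rightarrow> real" and t :: nat
  assumes "game_tree G"
    and "0 < \<epsilon>" and "\<epsilon> < 1"
    and "\<And>s. s \<in> {1..T} \<Longrightarrow> sig s \<in> rstrats G"
    and "t \<in> {1..T}"
  shows "let \<eta> = eta G T \<epsilon>; \<gamma> = gam G T \<epsilon>; \<pi> = pol G T \<epsilon> sig d (t - 1);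
             \<theta> = (\<lambda>a. if a \<in> reach G (sig t)
                        then \<eta> * d t a / (\<gamma> * beta G a + qprod G \<pi> a) else 0)
         in psi G \<eta> \<gamma> \<pi> (sig t) (d t) (root G) 1
            = (\<Sum>\<rho> \<in> rstrats G. (\<Prod>a \<in> Aof G \<rho>. \<pi> a) * exp (- (\<Sum>a \<in> Aof G \<rho>. \<theta> a)))"
proof -
  interpret gt G by unfold_locales (rule assms(1))
  define \<eta> where "\<eta> = eta G T \<epsilon>"
  define \<gamma> where "\<gamma> = gam G T \<epsilon>"
  define \<pi> where "\<pi> = pol G T \<epsilon> sig d (t - 1)"
  define \<theta> where "\<theta> = (\<lambda>a. if a \<in> reach G (sig t) then \<eta> * d t a / (\<gamma> * beta G a + qprod G \<pi> a) else 0)"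
  have I: "Inv \<pi>" unfolding \<pi>_def using assms(5) by (intro Inv_pol[OF assms(4)]) auto
  then have pol: "\<forall>u\<in>N. (\<Sum>b\<in>ch G u. \<pi> b) = 1" unfolding Inv_def by blast
  have "sig t \<in> rstrats G" using assms(4,5) by blast
  then obtain \<sigma>1 where s1: "is_strategy G \<sigma>1" "sig t = reduce G \<sigma>1" unfolding rstrats_def by blast
  have str: "\<forall>u\<in>N. \<sigma>1 u \<in> ch G u" using s1(1) unfolding is_strategy_def by blast
  have reachR: "reach G (sig t) = Rch G (root G) \<sigma>1" unfolding s1(2) reach_reduce_Rch ..
  have eq: "(\<lambda>a. exp (- \<theta> a)) = (\<lambda>a. exp (- (if a \<in> Rch G (root G) \<sigma>1 then \<eta> * d t a / (\<gamma> * beta G a + qprod G \<pi> a) else 0)))"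
    unfolding \<theta>_def reachR ..
  have rc: "\<sigma>1 (root G) \<in> ch G (root G)" using str root_N by blast
  have "psi G \<eta> \<gamma> \<pi> (sig t) (d t) (root G) 1 = psif G \<eta> \<gamma> \<pi> (reduce G \<sigma>1) (d t) (card (nodes G)) (root G) 1"
    unfolding psi_def s1(2) ..
  also have "\<dots> = Fw \<pi> (\<lambda>a. exp (- \<theta> a)) (root G)"
    unfolding eq
  proof (rule psi_F[OF str pol])
    show "root G \<in> N" by (rule root_N)
    show "root G \<in> Rch G (root G) \<sigma>1" by (rule Rch.R0)
    show "card (D (root G)) \<le> card (nodes G)" by (simp add: D_root)
    show "\<pi> (\<sigma>1 (root G)) * 1 = qprod G \<pi> (\<sigma>1 (root G))" using qprod_root_child[OF rc] by simp
  qed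
  also have "\<dots> = (\<Sum>\<rho> \<in> rstrats G. (\<Prod>a \<in> Aof G \<rho>. \<pi> a) * exp (- (\<Sum>a \<in> Aof G \<rho>. \<theta> a)))"
    by (rule top_sum[OF pol, symmetric])
  finally show ?thesis unfolding Let_def \<eta>_def \<gamma>_def \<pi>_def \<theta>_def .
qed

end
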